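(* Let $(S,d)$ be a metric space and let $\bullet\in\{\mathrm{FM},\mathrm{BL}\}$. Then $E^S_\bullet$ is a weak$^*$-dense subset of $\operatorname{ext}(B^S_\bullet)$. If, additionally, $S$ is compact, then $E^S_\bullet$ is dense in $\operatorname{ext}(B^S_\bullet)$ with respect to the supremum norm $\|\cdot\|_\infty$.
   Context: $\mathrm{BL}(S)$ is the space of bounded real-valued Lipschitz functions on $S$. For a function $f$ on a metric space, $|f|_L=\sup_{x\neq y}|f(x)-f(y)|/d(x,y)$ is its Lipschitz constant, with the convention $|f|_L=0$ if the space is a singleton. Two norms on $\mathrm{BL}(S)$ are used: $\|f\|_{\mathrm{BL}}=\|f\|_\infty+|f|_L$ and $\|f\|_{\mathrm{FM}}=\max(\|f\|_\infty,|f|_L)$. $B^S_\bullet=\{f\in\mathrm{BL}(S):\|f\|_\bullet\le1\}$, and $\operatorname{ext}(C)$ denotes the set of extreme points of a convex set $C$. Any subset $P\subset S$ carries the restricted metric. Non-trivial extreme points: $\operatorname{ext}_*(B^P_\bullet)=\operatorname{ext}(B^P_\bullet)\setminus\{f\in B^P_\bullet: |f|=\mathbf{1}\}$. For non-empty $P\subset S$ and $f\in\mathrm{BL}(P)$ let $\mathcal{E}^{S,0}_P f(x)=\sup_{p\in P}[f(p)-|f|_L d(p,x)]$ for $x\in S$, and $\mathcal{E}^S_P f=\max(\mathcal{E}^{S,0}_P f,-\|f\|_\infty)$. Define $E^S_{\mathrm{BL}}=\bigcup_{P\subset S\text{ finite}}\mathcal{E}^S_P(\operatorname{ext}_*(B^P_{\mathrm{BL}}))\cup\{\mathbf{1},-\mathbf{1}\}$,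 and $E^S_{\mathrm{FM}}=\bigcup_{P\subset S\text{ finite}}\mathcal{E}^S_P(\operatorname{ext}_*(B^P_{\mathrm{FM}}))\cup\{f\in B^S_{\mathrm{FM}}:|f|=\mathbf{1}\}\cup\{h_P: P\subset S\text{ finite, non-empty}\}$, where $h_P(x)=\max\big(-1,\sup_{p\in P}[1-d(x,p)]\big)$. The weak$^*$ topology on $\mathrm{BL}(S)$ is the weak topology $\sigma(\mathrm{BL}(S),X)$, where $X$ is the closure, in the dual of $(\mathrm{BL}(S),\|\cdot\|_\bullet)$ with dual norm, of the linear span of the point evaluations $f\mapsto f(x)$, $x\in S$ (so that $\mathrm{BL}(S)$ with norm $\|\cdot\|_\bullet$ is the dual of $X$, and $f\mapsto f(x)$ are continuous). *)

theory Defs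
  imports "HOL-Analysis.Analysis"
begin

text \<open>Functions on a subset A of a metric space are represented as total functions
  'a => real that vanish outside A (extensional representation).\<close>

definition supn :: "'a set \<Rightarrow> ('a \<Rightarrow> real) \<Rightarrow> real" where
  "supn A f = (if A = {} then 0 else (SUP x\<in>A. \<bar>f x\<bar>))"

definition lipc :: "'a::metric_space set \<Rightarrow> ('a \<Rightarrow> real) \<Rightarrow> real" where
  "lipc A f = (if \<exists>x\<in>A. \<exists>y\<in>A. x \<noteq> y
     then (SUP p\<in>{(x,y). x \<in> A \<and> y \<in> A \<and> x \<noteq> y}. \<bar>f (fst p) - f (snd p)\<bar> / dist (fst p) (snd p))
     else 0)"

definition BLsp :: "'a::metric_space set \<Rightarrow> ('a \<Rightarrow> real) set" where
  "BLsp A = {f. (\<forall>x. x \<notin> A \<longrightarrow> f x = 0) \<and> bounded (f ` A) \<and>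
              (\<exists>L. \<forall>x\<in>A. \<forall>y\<in>A. \<bar>f x - f y\<bar> \<le> L * dist x y)}"

datatype bl_norm = FM | BL

definition bnorm :: "bl_norm \<Rightarrow> 'a::metric_space set \<Rightarrow> ('a \<Rightarrow> real) \<Rightarrow> real" where
  "bnorm N A f = (case N of FM \<Rightarrow> max (supn A f) (lipc A f) | BL \<Rightarrow> supn A f + lipc A f)"

definition ballB :: "bl_norm \<Rightarrow> 'a::metric_space set \<Rightarrow> ('a \<Rightarrow> real) set" where
  "ballB N A = {f \<in> BLsp A. bnorm N A f \<le> 1}"

definition extp :: "('a \<Rightarrow> real) set \<Rightarrow> ('a \<Rightarrow> real) set" where
  "extp C = {f \<in> C. \<forall>g\<in>C. \<forall>h\<in>C. \<forall>t::real. 0 < t \<and> t < 1 \<and>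
                f = (\<lambda>x. t * g x + (1 - t) * h x) \<longrightarrow> g = h}"

definition ext_star :: "bl_norm \<Rightarrow> 'a::metric_space set \<Rightarrow> ('a \<Rightarrow> real) set" where
  "ext_star N A = extp (ballB N A) - {f \<in> ballB N A. \<forall>x\<in>A. \<bar>f x\<bar> = 1}"

definition ext_op :: "'a::metric_space set \<Rightarrow> 'a set \<Rightarrow> ('a \<Rightarrow> real) \<Rightarrow> ('a \<Rightarrow> real)" where
  "ext_op S P f = (\<lambda>x. if x \<in> S then
      max (Max ((\<lambda>p. f p - lipc P f * dist p x) ` P)) (- supn P f) else 0)"

definition oneS :: "'a set \<Rightarrow> ('a \<Rightarrow> real)" where
  "oneS S = (\<lambda>x. if x \<in> S then 1 else 0)"

definition hP :: "'a::metric_space set \<Rightarrow> 'a set \<Rightarrow> ('a \<Rightarrow> real)" where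
  "hP S P = (\<lambda>x. if x \<in> S then max (-1) (Max ((\<lambda>p. 1 - dist x p) ` P)) else 0)"

definition E_set :: "bl_norm \<Rightarrow> 'a::metric_space set \<Rightarrow> ('a \<Rightarrow> real) set" where
  "E_set N S = (case N of
     BL \<Rightarrow> (\<Union>P\<in>{P. finite P \<and> P \<subseteq> S}. ext_op S P ` ext_star BL P) \<union> {oneS S, (\<lambda>x. - oneS S x)}
   | FM \<Rightarrow> (\<Union>P\<in>{P. finite P \<and> P \<subseteq> S}. ext_op S P ` ext_star FM P)
           \<union> {f \<in> ballB FM S. \<forall>x\<in>S. \<bar>f x\<bar> = 1}
           \<union> {hP S P | P. finite P \<and> P \<noteq> {} \<and> P \<subseteq> S})"

text \<open>The predual X: closure, in the dual norm of (BL(S), norm N), of the span of point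
  evaluations.\<close>
definition predual :: "bl_norm \<Rightarrow> 'a::metric_space set \<Rightarrow> (('a \<Rightarrow> real) \<Rightarrow> real) set" where
  "predual N S = {\<phi>.
     (\<forall>f\<in>BLsp S. \<forall>g\<in>BLsp S. \<phi> (\<lambda>x. f x + g x) = \<phi> f + \<phi> g) \<and>
     (\<forall>f\<in>BLsp S. \<forall>a::real. \<phi> (\<lambda>x. a * f x) = a * \<phi> f) \<and>
     (\<exists>C. \<forall>f\<in>ballB N S. \<bar>\<phi> f\<bar> \<le> C) \<and>
     (\<forall>\<epsilon>>0. \<exists>F c. finite F \<and> F \<subseteq> S \<and>
         (\<forall>f\<in>ballB N S. \<bar>\<phi> f - (\<Sum>y\<in>F. c y * f y)\<bar> \<le> \<epsilon>))}"

text \<open>D is weak*-dense in T: every point of T lies in the sigma(BL(S),X)-closure of D,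
  i.e. every basic weak* neighbourhood of it meets D.\<close>
definition wstar_dense_in :: "bl_norm \<Rightarrow> 'a::metric_space set \<Rightarrow> ('a \<Rightarrow> real) set \<Rightarrow> ('a \<Rightarrow> real) set \<Rightarrow> bool" where
  "wstar_dense_in N S D T \<longleftrightarrow> (\<forall>f\<in>T. \<forall>\<Phi>. finite \<Phi> \<and> \<Phi> \<subseteq> predual N S \<longrightarrow>
      (\<forall>\<epsilon>>0. \<exists>g\<in>D. \<forall>\<phi>\<in>\<Phi>. \<bar>\<phi> g - \<phi> f\<bar> < \<epsilon>))"

definition sup_dense_in :: "'a set \<Rightarrow> ('a \<Rightarrow> real) set \<Rightarrow> ('a \<Rightarrow> real) set \<Rightarrow> bool" where
  "sup_dense_in S D T \<longleftrightarrow> (\<forall>f\<in>T. \<forall>\<epsilon>>0. \<exists>g\<in>D. \<forall>x\<in>S. \<bar>f x - g x\<bar> < \<epsilon>)"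

end

theory Submission
  imports Defs
begin


lemma BLsp_bdd_abs:
  assumes "f \<in> BLsp A" shows "bdd_above ((\<lambda>x. \<bar>f x\<bar>) ` A)"
proof -
  from assms have "bounded (f ` A)" by (simp add: BLsp_def)
  then obtain B where "\<forall>y\<in>f ` A. norm y \<le> B" by (auto simp: bounded_iff)
  then show ?thesis by (auto simp: bdd_above_def)
qed

lemma supn_ge:
  assumes "f \<in> BLsp A" "x \<in> A" shows "\<bar>f x\<bar> \<le> supn A f"
  using assms BLsp_bdd_abs[OF assms(1)] by (auto simp: supn_def intro: cSUP_upper)

lemma supn_le:
  assumes "\<And>x. x \<in> A \<Longrightarrow> \<bar>f x\<bar> \<le> c" "0 \<le> c" shows "supn A f \<le> c"
  using assms by (auto simp: supn_def intro: cSUP_least)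

lemma supn_nonneg:
  assumes "f \<in> BLsp A" shows "0 \<le> supn A f"
proof (cases "A = {}")
  case True then show ?thesis by (simp add: supn_def)
next
  case False then obtain x where "x \<in> A" by auto
  then show ?thesis using supn_ge[OF assms] by (meson abs_ge_zero order_trans)
qed

lemma BLsp_ratio_bdd:
  assumes "f \<in> BLsp A"
  shows "bdd_above ((\<lambda>p. \<bar>f (fst p) - f (snd p)\<bar> / dist (fst p) (snd p)) ` {(x,y). x \<in> A \<and> y \<in> A \<and> x \<noteq> y})"
proof -
  from assms obtain L where L: "\<forall>x\<in>A. \<forall>y\<in>A. \<bar>f x - f y\<bar> \<le> L * dist x y" by (auto simp: BLsp_def)
  have "\<bar>f a - f b\<bar> / dist a b \<le> L" if "a \<in> A" "b \<in> A" "a \<noteq> b" for a b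
    using L that by (simp add: divide_le_eq)
  then show ?thesis by (auto simp: bdd_above_def)
qed

lemma lipc_ge:
  assumes "f \<in> BLsp A" "a \<in> A" "b \<in> A" "a \<noteq> b"
  shows "\<bar>f a - f b\<bar> / dist a b \<le> lipc A f"
proof -
  have "(\<lambda>p. \<bar>f (fst p) - f (snd p)\<bar> / dist (fst p) (snd p)) (a,b)
     \<le> (SUP p\<in>{(x,y). x \<in> A \<and> y \<in> A \<and> x \<noteq> y}. \<bar>f (fst p) - f (snd p)\<bar> / dist (fst p) (snd p))"
    by (rule cSUP_upper) (use assms BLsp_ratio_bdd[OF assms(1)] in auto)
  then show ?thesis using assms by (auto simp: lipc_def)
qed

lemma lipc_le:
  assumes "\<And>a b. a \<in> A \<Longrightarrow> b \<in> A \<Longrightarrow> a \<noteq> b \<Longrightarrow> \<bar>f a - f b\<bar> / dist a b \<le> c" "0 \<le> c"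
  shows "lipc A f \<le> c"
  using assms unfolding lipc_def by (auto intro!: cSUP_least)

lemma lipc_nonneg:
  assumes "f \<in> BLsp A" shows "0 \<le> lipc A f"
proof (cases "\<exists>x\<in>A. \<exists>y\<in>A. x \<noteq> y")
  case True then obtain a b where "a \<in> A" "b \<in> A" "a \<noteq> b" by auto
  then show ?thesis using lipc_ge[OF assms] by (meson divide_nonneg_nonneg abs_ge_zero zero_le_dist order_trans)
next
  case False then show ?thesis by (simp add: lipc_def)
qed

lemma lipc_lip:
  assumes "f \<in> BLsp A" "a \<in> A" "b \<in> A"
  shows "\<bar>f a - f b\<bar> \<le> lipc A f * dist a b"
proof (cases "a = b")
  case True then show ?thesis using lipc_nonneg[OF assms(1)] by simp
next
  case False
  then have "\<bar>f a - f b\<bar> / dist a b \<le> lipc A f" using lipc_ge assms by blast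
  then show ?thesis using False by (simp add: divide_le_eq mult.commute)
qed

definition inB :: "bl_norm \<Rightarrow> 'a::metric_space set \<Rightarrow> ('a \<Rightarrow> real) \<Rightarrow> bool" where
  "inB N A f \<longleftrightarrow> (\<forall>x. x \<notin> A \<longrightarrow> f x = 0) \<and> (\<forall>x\<in>A. \<bar>f x\<bar> \<le> 1) \<and>
     (case N of FM \<Rightarrow> (\<forall>x\<in>A. \<forall>y\<in>A. \<bar>f x - f y\<bar> \<le> dist x y)
      | BL \<Rightarrow> (\<forall>x\<in>A. \<forall>a\<in>A. \<forall>b\<in>A. a \<noteq> b \<longrightarrow> \<bar>f x\<bar> + \<bar>f a - f b\<bar> / dist a b \<le> 1))"

lemma inB_lip1:
  assumes "inB N A f" "x \<in> A" "y \<in> A" shows "\<bar>f x - f y\<bar> \<le> dist x y"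
proof (cases N)
  case FM then show ?thesis using assms by (auto simp: inB_def)
next
  case BL
  show ?thesis
  proof (cases "x = y")
    case False
    then have "\<bar>f x\<bar> + \<bar>f x - f y\<bar> / dist x y \<le> 1" using assms BL by (auto simp: inB_def)
    then have "\<bar>f x - f y\<bar> / dist x y \<le> 1" by (smt (verit) abs_ge_zero)
    then show ?thesis using False by (simp add: divide_le_eq)
  qed simp
qed

lemma inB_BLsp: assumes "inB N A f" shows "f \<in> BLsp A"
proof -
  have "bounded (f ` A)" using assms unfolding bounded_iff inB_def by auto
  moreover have "\<forall>x\<in>A. \<forall>y\<in>A. \<bar>f x - f y\<bar> \<le> 1 * dist x y" using inB_lip1[OF assms] by simp
  ultimately show ?thesis using assms unfolding BLsp_def inB_def by blast
qed

lemma ballB_char: "ballB N A = {f. inB N A f}"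
proof (intro set_eqI iffI; simp)
  fix f assume f: "f \<in> ballB N A"
  then have B: "f \<in> BLsp A" and n: "bnorm N A f \<le> 1" by (auto simp: ballB_def)
  have v: "\<forall>x. x \<notin> A \<longrightarrow> f x = 0" using B by (simp add: BLsp_def)
  have s0: "0 \<le> supn A f" "0 \<le> lipc A f" using supn_nonneg lipc_nonneg B by auto
  show "inB N A f"
  proof (cases N)
    case FM
    then have "supn A f \<le> 1" "lipc A f \<le> 1" using n by (auto simp: bnorm_def)
    moreover have "\<bar>f x - f y\<bar> \<le> dist x y" if "x \<in> A" "y \<in> A" for x y
    proof -
      have "\<bar>f x - f y\<bar> \<le> lipc A f * dist x y" using lipc_lip[OF B that] .
      also have "\<dots> \<le> dist x y" using \<open>lipc A f \<le> 1\<close> by (simp add: mult_left_le_one_le s0)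
      finally show ?thesis .
    qed
    ultimately show ?thesis using FM v supn_ge[OF B] \<open>supn A f \<le> 1\<close> unfolding inB_def
      by (auto intro: order_trans[of _ "supn A f"])
  next
    case BL
    then have "supn A f + lipc A f \<le> 1" using n by (auto simp: bnorm_def)
    have "\<bar>f x\<bar> + \<bar>f a - f b\<bar> / dist a b \<le> 1" if "x \<in> A" "a \<in> A" "b \<in> A" "a \<noteq> b" for x a b
      using supn_ge[OF B that(1)] lipc_ge[OF B that(2-4)] \<open>supn A f + lipc A f \<le> 1\<close> by linarith
    moreover have "\<bar>f x\<bar> \<le> 1" if "x \<in> A" for x
      using supn_ge[OF B that] s0 \<open>supn A f + lipc A f \<le> 1\<close> by linarith
    ultimately show ?thesis using BL v unfolding inB_def by auto
  qed
next
  fix f assume f: "inB N A f"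
  have B: "f \<in> BLsp A" by (rule inB_BLsp[OF f])
  have s1: "supn A f \<le> 1" using f by (auto simp: inB_def intro: supn_le)
  have "bnorm N A f \<le> 1"
  proof (cases N)
    case FM
    have "lipc A f \<le> 1" using inB_lip1[OF f] by (auto intro!: lipc_le simp: divide_le_eq)
    then show ?thesis using FM s1 by (simp add: bnorm_def)
  next
    case BL
    show ?thesis
    proof (cases "\<exists>x\<in>A. \<exists>y\<in>A. x \<noteq> y")
      case False
      then have "lipc A f = 0" by (simp add: lipc_def)
      then show ?thesis using BL s1 by (simp add: bnorm_def)
    next
      case True
      have "\<bar>f a - f b\<bar> / dist a b \<le> 1 - supn A f" if ab: "a \<in> A" "b \<in> A" "a \<noteq> b" for a b
      proof -
        have "supn A f \<le> 1 - \<bar>f a - f b\<bar> / dist a b"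
        proof (rule supn_le)
          show "\<bar>f x\<bar> \<le> 1 - \<bar>f a - f b\<bar> / dist a b" if "x \<in> A" for x
          proof -
            have "\<bar>f x\<bar> + \<bar>f a - f b\<bar> / dist a b \<le> 1" using f BL ab that by (auto simp: inB_def)
            then show ?thesis by linarith
          qed
          show "0 \<le> 1 - \<bar>f a - f b\<bar> / dist a b"
          proof -
            have "\<bar>f a\<bar> + \<bar>f a - f b\<bar> / dist a b \<le> 1" using f BL ab by (auto simp: inB_def)
            then show ?thesis by (smt (verit) abs_ge_zero)
          qed
        qed
        then show ?thesis by simp
      qed
      moreover have "0 \<le> 1 - supn A f" using s1 by simp
      ultimately have "lipc A f \<le> 1 - supn A f" by (rule lipc_le)
      then show ?thesis using BL by (simp add: bnorm_def)
    qed
  qed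
  then show "f \<in> ballB N A" using B by (simp add: ballB_def)
qed


lemma pinch_le:
  fixes t F g h :: real
  assumes "0 < t" "t < 1" "F = t * g + (1 - t) * h" "F \<le> g" "F \<le> h"
  shows "g = F" "h = F"
proof -
  have a: "t * (g - F) \<ge> 0" "(1 - t) * (h - F) \<ge> 0" using assms by auto
  have s: "t * (g - F) + (1 - t) * (h - F) = 0" using assms(3) by (simp add: algebra_simps)
  then have "t * (g - F) = 0" "(1 - t) * (h - F) = 0" using a by linarith+
  then show "g = F" "h = F" using assms(1,2) by auto
qed

lemma pinch_ge:
  fixes t F g h :: real
  assumes "0 < t" "t < 1" "F = t * g + (1 - t) * h" "g \<le> F" "h \<le> F"
  shows "g = F" "h = F"
proof -
  have a: "t * (F - g) \<ge> 0" "(1 - t) * (F - h) \<ge> 0" using assms by auto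
  have s: "t * (F - g) + (1 - t) * (F - h) = 0" using assms(3) by (simp add: algebra_simps)
  then have "t * (F - g) = 0" "(1 - t) * (F - h) = 0" using a by linarith+
  then show "g = F" "h = F" using assms(1,2) by auto
qed

lemma extpD:
  assumes "f \<in> extp C" "g \<in> C" "h \<in> C" "0 < t" "t < 1" "\<And>x. f x = t * g x + (1 - t) * h x"
  shows "g = h"
  using assms unfolding extp_def by (auto simp: fun_eq_iff)

lemma extp_pm:
  assumes "f \<in> extp C" "(\<lambda>x. f x + u x) \<in> C" "(\<lambda>x. f x - u x) \<in> C"
  shows "u x = 0"
proof -
  have "(\<lambda>x. f x + u x) = (\<lambda>x. f x - u x)"
    by (rule extpD[OF assms(1-3), of "1/2"]) (simp_all add: field_simps)
  then have "f x + u x = f x - u x" by (rule fun_cong)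
  then show ?thesis by linarith
qed

lemma extp_sub: "f \<in> extp C \<Longrightarrow> f \<in> C" by (simp add: extp_def)

lemma inB_restrict:
  assumes "inB N S g" "P \<subseteq> S"
  shows "inB N P (\<lambda>x. if x \<in> P then g x else 0)"
  using assms unfolding inB_def by (cases N) (auto simp: subset_iff)

lemma inB_vanish: "inB N A f \<Longrightarrow> x \<notin> A \<Longrightarrow> f x = 0" by (simp add: inB_def)
lemma inB_abs: "inB N A f \<Longrightarrow> x \<in> A \<Longrightarrow> \<bar>f x\<bar> \<le> 1" by (simp add: inB_def)
lemma inB_BL: "inB BL A f \<Longrightarrow> x \<in> A \<Longrightarrow> a \<in> A \<Longrightarrow> b \<in> A \<Longrightarrow> a \<noteq> b \<Longrightarrow>
   \<bar>f x\<bar> + \<bar>f a - f b\<bar> / dist a b \<le> 1" by (simp add: inB_def)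

lemma SUP_attained:
  fixes g :: "'b \<Rightarrow> real"
  assumes "finite A" "A \<noteq> {}" shows "\<exists>x\<in>A. (SUP x\<in>A. g x) = g x"
proof -
  have "(SUP x\<in>A. g x) = Max (g ` A)" using assms by (simp add: cSup_eq_Max)
  moreover have "Max (g ` A) \<in> g ` A" using assms by (intro Max_in) auto
  ultimately show ?thesis by auto
qed

lemma supn_attained:
  assumes "finite A" "A \<noteq> {}" shows "\<exists>x\<in>A. supn A f = \<bar>f x\<bar>"
  using SUP_attained[OF assms, of "\<lambda>x. \<bar>f x\<bar>"] assms by (simp add: supn_def)

lemma lipc_attained:
  assumes "finite A" "a \<in> A" "b \<in> A" "a \<noteq> b"
  shows "\<exists>p\<in>A. \<exists>q\<in>A. p \<noteq> q \<and> lipc A f = \<bar>f p - f q\<bar> / dist p q"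
proof -
  let ?Q = "{(x,y). x \<in> A \<and> y \<in> A \<and> x \<noteq> y}"
  have "finite ?Q" by (rule finite_subset[of _ "A \<times> A"]) (use assms(1) in auto)
  moreover have "?Q \<noteq> {}" using assms by auto
  ultimately obtain pq where "pq \<in> ?Q" and
    e: "(SUP p\<in>?Q. \<bar>f (fst p) - f (snd p)\<bar> / dist (fst p) (snd p)) = \<bar>f (fst pq) - f (snd pq)\<bar> / dist (fst pq) (snd pq)"
    using SUP_attained by blast
  then show ?thesis using assms unfolding lipc_def by (cases pq) auto
qed

lemma supn_le_one: "inB N A f \<Longrightarrow> supn A f \<le> 1"
  by (auto intro: supn_le simp: inB_def)

lemma ballB_BLsp: "f \<in> ballB N A \<Longrightarrow> f \<in> BLsp A" by (simp add: ballB_def)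

lemma ballB_bnorm: "f \<in> ballB N A \<Longrightarrow> bnorm N A f \<le> 1" by (simp add: ballB_def)

lemma ext_star_ne:
  assumes "f \<in> ext_star N P" shows "P \<noteq> {}"
  using assms unfolding ext_star_def by (auto dest: extp_sub)

lemma ext_star_FM:
  assumes "f \<in> ext_star FM P"
  shows "supn P f = 1" "lipc P f = 1"
proof -
  have ex: "f \<in> extp (ballB FM P)" and nt: "\<not> (\<forall>x\<in>P. \<bar>f x\<bar> = 1)"
    using assms by (auto simp: ext_star_def dest: extp_sub)
  have fB: "f \<in> ballB FM P" using ex by (rule extp_sub)
  then have fi: "inB FM P f" by (simp add: ballB_char)
  have B: "f \<in> BLsp P" using fB by (rule ballB_BLsp)
  have nrm: "supn P f \<le> 1" "lipc P f \<le> 1" using ballB_bnorm[OF fB] by (auto simp: bnorm_def)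
  have P: "P \<noteq> {}" using ext_star_ne[OF assms] .
  have a0: "0 \<le> supn P f" "0 \<le> lipc P f" using B supn_nonneg lipc_nonneg by auto
  show "supn P f = 1"
  proof (rule ccontr)
    assume "supn P f \<noteq> 1"
    then have lt: "supn P f < 1" using nrm by simp
    define u where "u = (\<lambda>x. if x \<in> P then 1 - supn P f else 0)"
    have pm: "inB FM P (\<lambda>x. f x + s * u x)" if "\<bar>s\<bar> = 1" for s
    proof -
      have "\<bar>f x + s * u x\<bar> \<le> 1" if "x \<in> P" for x
      proof -
        have "\<bar>f x\<bar> \<le> supn P f" using supn_ge[OF B that] .
        moreover have "\<bar>s * u x\<bar> = 1 - supn P f" using \<open>\<bar>s\<bar> = 1\<close> that lt by (simp add: u_def abs_mult)
        ultimately show ?thesis by (smt (verit) abs_triangle_ineq)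
      qed
      moreover have "\<bar>(f x + s * u x) - (f y + s * u y)\<bar> \<le> dist x y" if "x \<in> P" "y \<in> P" for x y
        using fi that by (simp add: u_def inB_def)
      ultimately show ?thesis using fi by (auto simp: inB_def u_def)
    qed
    then have "(\<lambda>x. f x + u x) \<in> ballB FM P" "(\<lambda>x. f x - u x) \<in> ballB FM P"
      using pm[of 1] pm[of "-1"] by (auto simp: ballB_char)
    then have "\<And>x. u x = 0" using extp_pm[OF ex] by blast
    then show False using P lt unfolding u_def by (metis all_not_in_conv diff_gt_0_iff_gt less_irrefl)
  qed
  show "lipc P f = 1"
  proof (rule ccontr)
    assume "lipc P f \<noteq> 1"
    then have lt: "lipc P f < 1" using nrm by simp
    define L where "L = lipc P f"
    have L0: "0 \<le> L" "L < 1" using a0 lt by (auto simp: L_def)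
    obtain x0 where x0: "x0 \<in> P" "\<bar>f x0\<bar> \<noteq> 1" using nt by auto
    have x0': "\<bar>f x0\<bar> < 1" using x0 fi by (auto simp: inB_def)
    define u where "u = (\<lambda>x. if x \<in> P then (1 - L) * (1 - \<bar>f x\<bar>) else 0)"
    have pm: "inB FM P (\<lambda>x. f x + s * u x)" if s: "\<bar>s\<bar> = 1" for s
    proof -
      have "\<bar>f x + s * u x\<bar> \<le> 1" if "x \<in> P" for x
      proof -
        have fx: "\<bar>f x\<bar> \<le> 1" using fi that by (simp add: inB_def)
        have "\<bar>s * u x\<bar> = (1 - L) * (1 - \<bar>f x\<bar>)" using s that L0 fx by (simp add: u_def abs_mult)
        also have "\<dots> \<le> 1 - \<bar>f x\<bar>" using L0 fx by (simp add: mult_left_le_one_le)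
        finally have "\<bar>s * u x\<bar> \<le> 1 - \<bar>f x\<bar>" .
        moreover have "\<bar>f x + s * u x\<bar> \<le> \<bar>f x\<bar> + \<bar>s * u x\<bar>" by (rule abs_triangle_ineq)
        ultimately show ?thesis by linarith
      qed
      moreover have "\<bar>(f x + s * u x) - (f y + s * u y)\<bar> \<le> dist x y" if xy: "x \<in> P" "y \<in> P" for x y
      proof -
        have l: "\<bar>f x - f y\<bar> \<le> L * dist x y" unfolding L_def by (rule lipc_lip[OF B xy])
        have e: "s * u x - s * u y = s * ((1 - L) * (\<bar>f y\<bar> - \<bar>f x\<bar>))"
          using xy by (simp add: u_def algebra_simps)
        have "\<bar>s * u x - s * u y\<bar> = (1 - L) * \<bar>\<bar>f y\<bar> - \<bar>f x\<bar>\<bar>"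
          unfolding e using s L0 by (simp add: abs_mult)
        also have "\<dots> \<le> (1 - L) * \<bar>f x - f y\<bar>"
        proof -
          have "\<bar>\<bar>f y\<bar> - \<bar>f x\<bar>\<bar> \<le> \<bar>f y - f x\<bar>" by (rule abs_triangle_ineq3)
          also have "\<dots> = \<bar>f x - f y\<bar>" by (rule abs_minus_commute)
          finally show ?thesis using L0 by (intro mult_left_mono) auto
        qed
        finally have c1: "\<bar>s * u x - s * u y\<bar> \<le> (1 - L) * \<bar>f x - f y\<bar>" .
        have "(f x + s * u x) - (f y + s * u y) = (f x - f y) + (s * u x - s * u y)" by simp
        then have "\<bar>(f x + s * u x) - (f y + s * u y)\<bar> \<le> \<bar>f x - f y\<bar> + \<bar>s * u x - s * u y\<bar>"
          by (metis abs_triangle_ineq)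
        also have "\<dots> \<le> \<bar>f x - f y\<bar> + (1 - L) * \<bar>f x - f y\<bar>" using c1 by linarith
        also have "\<dots> = (2 - L) * \<bar>f x - f y\<bar>" by (simp add: algebra_simps)
        finally have "\<bar>(f x + s * u x) - (f y + s * u y)\<bar> \<le> (2 - L) * \<bar>f x - f y\<bar>" .
        also have "\<dots> \<le> (2 - L) * (L * dist x y)" using l L0 by (intro mult_left_mono) auto
        also have "\<dots> \<le> dist x y"
        proof -
          have "0 \<le> (1 - L) * (1 - L)" by (rule zero_le_square)
          moreover have "(2 - L) * L = 1 - (1 - L) * (1 - L)" by (simp add: algebra_simps)
          ultimately have "(2 - L) * L \<le> 1" by linarith
          then have "(2 - L) * L * dist x y \<le> 1 * dist x y" by (intro mult_right_mono) auto
          then show ?thesis by (simp add: mult.assoc)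
        qed
        finally show ?thesis .
      qed
      ultimately show ?thesis using fi by (auto simp: inB_def u_def)
    qed
    then have "(\<lambda>x. f x + u x) \<in> ballB FM P" "(\<lambda>x. f x - u x) \<in> ballB FM P"
      using pm[of 1] pm[of "-1"] by (auto simp: ballB_char)
    then have "u x0 = 0" using extp_pm[OF ex] by blast
    then show False using x0 x0' L0 by (simp add: u_def)
  qed
qed


lemma oneS_inB: "inB N A (oneS A)" "inB N A (\<lambda>x. - oneS A x)"
  by (cases N; auto simp: inB_def oneS_def)+

lemma ext_star_BL:
  assumes "f \<in> ext_star BL P" "finite P"
  shows "supn P f + lipc P f = 1"
    and "\<exists>p\<in>P. \<bar>f p\<bar> = supn P f"
    and "\<exists>p\<in>P. \<exists>q\<in>P. p \<noteq> q \<and> \<bar>f p - f q\<bar> / dist p q = lipc P f"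
proof -
  have ex: "f \<in> extp (ballB BL P)" and nt: "\<not> (\<forall>x\<in>P. \<bar>f x\<bar> = 1)"
    using assms by (auto simp: ext_star_def dest: extp_sub)
  have fB: "f \<in> ballB BL P" using ex by (rule extp_sub)
  then have fi: "inB BL P f" by (simp add: ballB_char)
  have B: "f \<in> BLsp P" using fB by (rule ballB_BLsp)
  have nrm: "supn P f + lipc P f \<le> 1" using ballB_bnorm[OF fB] by (auto simp: bnorm_def)
  have P: "P \<noteq> {}" using ext_star_ne[OF assms(1)] .
  have a0: "0 \<le> supn P f" "0 \<le> lipc P f" using B supn_nonneg lipc_nonneg by auto
  show s1: "supn P f + lipc P f = 1"
  proof (rule ccontr)
    assume "supn P f + lipc P f \<noteq> 1"
    define s where "s = supn P f + lipc P f"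
    have s0: "0 \<le> s" "s < 1" using a0 nrm \<open>supn P f + lipc P f \<noteq> 1\<close> by (auto simp: s_def)
    have ss: "(2 - s) * s \<le> 1"
    proof -
      have "0 \<le> (1 - s) * (1 - s)" by (rule zero_le_square)
      moreover have "(2 - s) * s = 1 - (1 - s) * (1 - s)" by (simp add: algebra_simps)
      ultimately show ?thesis by linarith
    qed
    have pm: "inB BL P (\<lambda>x. f x + c * ((1 - s) * f x))" if c: "\<bar>c\<bar> = 1" for c
    proof -
      define k where "k = 1 + c * (1 - s)"
      have k: "0 \<le> k" "k \<le> 2 - s"
      proof -
        have "\<bar>c * (1 - s)\<bar> = 1 - s" using c s0 by (simp add: abs_mult)
        then have "\<bar>c * (1 - s)\<bar> \<le> 1 - s" by simp
        then have "c * (1 - s) \<le> 1 - s \<and> - (c * (1 - s)) \<le> 1 - s" by (simp only: abs_le_iff)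
        then show "0 \<le> k" "k \<le> 2 - s" unfolding k_def using s0 by linarith+
      qed
      have e: "\<And>x. f x + c * ((1 - s) * f x) = k * f x" by (simp add: k_def algebra_simps)
      have "\<bar>k * f x\<bar> \<le> 1" if "x \<in> P" for x
      proof -
        have "\<bar>f x\<bar> \<le> s" using supn_ge[OF B that] a0 by (simp add: s_def)
        then have "k * \<bar>f x\<bar> \<le> (2 - s) * s" using k s0 by (intro mult_mono) auto
        moreover have "\<bar>k * f x\<bar> = k * \<bar>f x\<bar>" using k by (simp add: abs_mult)
        ultimately show ?thesis using ss by linarith
      qed
      moreover have "\<bar>k * f x\<bar> + \<bar>k * f a - k * f b\<bar> / dist a b \<le> 1"
        if "x \<in> P" "a \<in> P" "b \<in> P" "a \<noteq> b" for x a b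
      proof -
        have "\<bar>f x\<bar> + \<bar>f a - f b\<bar> / dist a b \<le> s"
          using supn_ge[OF B that(1)] lipc_ge[OF B that(2-4)] by (simp add: s_def)
        then have "k * (\<bar>f x\<bar> + \<bar>f a - f b\<bar> / dist a b) \<le> (2 - s) * s" using k s0
          by (intro mult_mono) auto
        moreover have "\<bar>k * f x\<bar> + \<bar>k * f a - k * f b\<bar> / dist a b = k * (\<bar>f x\<bar> + \<bar>f a - f b\<bar> / dist a b)"
        proof -
          have "k * f a - k * f b = k * (f a - f b)" by (simp add: right_diff_distrib)
          then have "\<bar>k * f a - k * f b\<bar> = k * \<bar>f a - f b\<bar>" using k by (simp add: abs_mult)
          moreover have "\<bar>k * f x\<bar> = k * \<bar>f x\<bar>" using k by (simp add: abs_mult)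
          ultimately show ?thesis by (simp add: distrib_left)
        qed
        ultimately show ?thesis using ss by linarith
      qed
      ultimately have "inB BL P (\<lambda>x. k * f x)" using fi by (auto simp: inB_def)
      then show ?thesis by (simp add: e)
    qed
    have "(\<lambda>x. f x + (1 - s) * f x) \<in> ballB BL P" "(\<lambda>x. f x - (1 - s) * f x) \<in> ballB BL P"
      using pm[of 1] pm[of "-1"] by (simp_all add: ballB_char)
    then have "\<And>x. (1 - s) * f x = 0" using extp_pm[OF ex, of "\<lambda>x. (1 - s) * f x"] by blast
    then have f0: "\<And>x. f x = 0" using s0 by simp
    have "(\<lambda>x. f x + oneS P x) \<in> ballB BL P" "(\<lambda>x. f x - oneS P x) \<in> ballB BL P"
      using oneS_inB[of BL P] by (simp_all add: ballB_char f0)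
    then have "\<And>x. oneS P x = 0" using extp_pm[OF ex, of "oneS P"] by blast
    moreover obtain x0 where "x0 \<in> P" using P by auto
    ultimately show False by (metis oneS_def zero_neq_one)
  qed
  show "\<exists>p\<in>P. \<bar>f p\<bar> = supn P f" using supn_attained[OF assms(2) P] by metis
  have two: "\<exists>a\<in>P. \<exists>b\<in>P. a \<noteq> b"
  proof (rule ccontr)
    assume na: "\<not> ?thesis"
    then have l0: "lipc P f = 0" by (simp add: lipc_def)
    obtain p where p: "p \<in> P" "supn P f = \<bar>f p\<bar>" using supn_attained[OF assms(2) P] by metis
    have "P = {p}" using na p by auto
    then show False using nt s1 l0 p by auto
  qed
  then obtain a b where "a \<in> P" "b \<in> P" "a \<noteq> b" by auto
  from lipc_attained[OF assms(2) this, of f]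
  show "\<exists>p\<in>P. \<exists>q\<in>P. p \<noteq> q \<and> \<bar>f p - f q\<bar> / dist p q = lipc P f" by metis
qed

lemma Maxlip:
  fixes f :: "'a::metric_space \<Rightarrow> real"
  assumes "finite P" "P \<noteq> {}" "0 \<le> L"
  shows "Max ((\<lambda>p. f p - L * dist p x) ` P) \<le> Max ((\<lambda>p. f p - L * dist p y) ` P) + L * dist x y"
proof -
  have "Max ((\<lambda>p. f p - L * dist p x) ` P) \<in> (\<lambda>p. f p - L * dist p x) ` P"
    using assms by (intro Max_in) auto
  then obtain p where p: "p \<in> P" "Max ((\<lambda>p. f p - L * dist p x) ` P) = f p - L * dist p x"
    by auto
  have "dist p y \<le> dist p x + dist x y" by (rule dist_triangle)
  then have "L * dist p y \<le> L * (dist p x + dist x y)" using assms(3) by (rule mult_left_mono)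
  then have "f p - L * dist p x \<le> f p - L * dist p y + L * dist x y"
    by (simp add: distrib_left)
  also have "f p - L * dist p y \<le> Max ((\<lambda>p. f p - L * dist p y) ` P)"
    using p assms by (intro Max_ge) auto
  finally show ?thesis using p by linarith
qed

lemma ext_op_props:
  fixes f :: "'a::metric_space \<Rightarrow> real"
  assumes "finite P" "P \<noteq> {}" "P \<subseteq> S" "f \<in> BLsp P"
  shows "x \<notin> S \<Longrightarrow> ext_op S P f x = 0"
    and "x \<in> S \<Longrightarrow> \<bar>ext_op S P f x\<bar> \<le> supn P f"
    and "x \<in> S \<Longrightarrow> y \<in> S \<Longrightarrow> \<bar>ext_op S P f x - ext_op S P f y\<bar> \<le> lipc P f * dist x y"
    and "x \<in> P \<Longrightarrow> ext_op S P f x = f x"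
proof -
  let ?a = "supn P f" and ?L = "lipc P f"
  let ?M = "\<lambda>x. Max ((\<lambda>p. f p - ?L * dist p x) ` P)"
  have a0: "0 \<le> ?a" "0 \<le> ?L" using supn_nonneg[OF assms(4)] lipc_nonneg[OF assms(4)] by auto
  have e: "x \<in> S \<Longrightarrow> ext_op S P f x = max (?M x) (- ?a)" for x by (simp add: ext_op_def)
  show "x \<notin> S \<Longrightarrow> ext_op S P f x = 0" by (simp add: ext_op_def)
  have Mup: "?M x \<le> ?a" for x
  proof -
    have "f p - ?L * dist p x \<le> ?a" if "p \<in> P" for p
    proof -
      have "f p \<le> \<bar>f p\<bar>" by simp
      also have "\<dots> \<le> ?a" by (rule supn_ge[OF assms(4) that])
      moreover have "0 \<le> ?L * dist p x" using a0 by simp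
      ultimately show ?thesis by linarith
    qed
    then show ?thesis using assms by (subst Max_le_iff) auto
  qed
  show "x \<in> S \<Longrightarrow> \<bar>ext_op S P f x\<bar> \<le> ?a" using e[of x] Mup[of x] a0 by auto
  show "x \<in> S \<Longrightarrow> y \<in> S \<Longrightarrow> \<bar>ext_op S P f x - ext_op S P f y\<bar> \<le> ?L * dist x y"
  proof -
    assume xy: "x \<in> S" "y \<in> S"
    have 1: "?M x \<le> ?M y + ?L * dist x y" by (rule Maxlip[OF assms(1,2) a0(2)])
    have 2: "?M y \<le> ?M x + ?L * dist x y" using Maxlip[OF assms(1,2) a0(2), where x=y and y=x] by (simp add: dist_commute)
    have 3: "0 \<le> ?L * dist x y" using a0 by simp
    show ?thesis using e[OF xy(1)] e[OF xy(2)] 1 2 3 by (auto simp: max_def abs_le_iff)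
  qed
  show "x \<in> P \<Longrightarrow> ext_op S P f x = f x"
  proof -
    assume x: "x \<in> P"
    have "?M x = f x"
    proof (rule antisym)
      show "?M x \<le> f x"
      proof (subst Max_le_iff)
        show "\<forall>v\<in>(\<lambda>p. f p - ?L * dist p x) ` P. v \<le> f x"
        proof
          fix v assume "v \<in> (\<lambda>p. f p - ?L * dist p x) ` P"
          then obtain p where p: "p \<in> P" "v = f p - ?L * dist p x" by auto
          have "\<bar>f p - f x\<bar> \<le> ?L * dist p x" by (rule lipc_lip[OF assms(4) p(1) x])
          then show "v \<le> f x" using p by (simp add: abs_le_iff)
        qed
      qed (use assms in auto)
      have "f x - ?L * dist x x \<le> ?M x" by (rule Max_ge[OF _ imageI[OF x]]) (use assms in auto)
      then show "f x \<le> ?M x" by simp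
    qed
    moreover have "- ?a \<le> f x" using supn_ge[OF assms(4) x] by simp
    ultimately show ?thesis using e[of x] x assms(3) by auto
  qed
qed


lemma ext_star_in: "f \<in> ext_star N P \<Longrightarrow> f \<in> extp (ballB N P)" by (simp add: ext_star_def)

lemma ext_star_inB:
  assumes "f \<in> ext_star N P" "finite P" "P \<subseteq> S"
  shows "inB N S (ext_op S P f)"
proof -
  have fB: "f \<in> ballB N P" using ext_star_in[OF assms(1)] by (rule extp_sub)
  have B: "f \<in> BLsp P" using fB by (rule ballB_BLsp)
  have P: "P \<noteq> {}" using ext_star_ne[OF assms(1)] .
  note pr = ext_op_props[OF assms(2) P assms(3) B]
  have a0: "0 \<le> supn P f" "0 \<le> lipc P f" using supn_nonneg[OF B] lipc_nonneg[OF B] by auto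
  show ?thesis
  proof (cases N)
    case FM
    have n: "supn P f = 1" "lipc P f = 1" using ext_star_FM assms(1) FM by auto
    show ?thesis using FM pr(1) pr(2)[unfolded n] pr(3)[unfolded n] by (auto simp: inB_def)
  next
    case BL
    have n: "supn P f + lipc P f = 1" using ext_star_BL(1) assms(1,2) BL by auto
    have "\<bar>ext_op S P f x\<bar> + \<bar>ext_op S P f a - ext_op S P f b\<bar> / dist a b \<le> 1"
      if "x \<in> S" "a \<in> S" "b \<in> S" "a \<noteq> b" for x a b
    proof -
      have "\<bar>ext_op S P f a - ext_op S P f b\<bar> \<le> lipc P f * dist a b" using pr(3) that by auto
      then have "\<bar>ext_op S P f a - ext_op S P f b\<bar> / dist a b \<le> lipc P f" using that
        by (simp add: divide_le_eq)
      moreover have "\<bar>ext_op S P f x\<bar> \<le> supn P f" using pr(2) that by auto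
      ultimately show ?thesis using n by linarith
    qed
    moreover have "\<bar>ext_op S P f x\<bar> \<le> 1" if "x \<in> S" for x using pr(2)[OF that] n a0 by linarith
    ultimately show ?thesis using BL pr(1) by (auto simp: inB_def)
  qed
qed

lemma ext_star_lower:
  assumes "f \<in> ext_star N P" "finite P" "P \<subseteq> S" "inB N S g" "\<forall>p\<in>P. g p = f p" "x \<in> S"
  shows "ext_op S P f x \<le> g x"
proof -
  have fB: "f \<in> ballB N P" using ext_star_in[OF assms(1)] by (rule extp_sub)
  have B: "f \<in> BLsp P" using fB by (rule ballB_BLsp)
  have P: "P \<noteq> {}" using ext_star_ne[OF assms(1)] .
  have lw: "- supn P f \<le> g x" and up: "\<And>p. p \<in> P \<Longrightarrow> f p - lipc P f * dist p x \<le> g x"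
  proof -
    have "(- supn P f \<le> g x) \<and> (\<forall>p\<in>P. f p - lipc P f * dist p x \<le> g x)"
    proof (cases N)
      case FM
      have n: "supn P f = 1" "lipc P f = 1" using ext_star_FM assms(1) FM by auto
      have "- 1 \<le> g x" using inB_abs[OF assms(4,6)] by simp
      moreover have "f p - dist p x \<le> g x" if "p \<in> P" for p
        using inB_lip1[OF assms(4), of p x] that assms(3,5,6) by (auto simp: abs_le_iff)
      ultimately show ?thesis using n by simp
    next
      case BL
      have n: "supn P f + lipc P f = 1" using ext_star_BL(1) assms(1,2) BL by auto
      obtain p0 q0 where pq: "p0 \<in> P" "q0 \<in> P" "p0 \<noteq> q0" "\<bar>f p0 - f q0\<bar> / dist p0 q0 = lipc P f"
        using ext_star_BL(3) assms(1,2) BL by blast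
      obtain p1 where p1: "p1 \<in> P" "\<bar>f p1\<bar> = supn P f" using ext_star_BL(2) assms(1,2) BL by blast
      have "\<bar>g x\<bar> + \<bar>g p0 - g q0\<bar> / dist p0 q0 \<le> 1"
        using inB_BL[of P _ x p0 q0] assms(4) BL pq assms(3,6) by (auto simp: inB_def subset_iff)
      then have "\<bar>g x\<bar> \<le> supn P f" using pq assms(5) n by simp
      moreover have "f p - lipc P f * dist p x \<le> g x" if p: "p \<in> P" for p
      proof (cases "p = x")
        case True then show ?thesis using assms(5) p by simp
      next
        case False
        have "\<bar>g p1\<bar> + \<bar>g p - g x\<bar> / dist p x \<le> 1"
          using assms(4) BL p1 p False assms(3,6) by (auto simp: inB_def subset_iff)
        then have "\<bar>g p - g x\<bar> / dist p x \<le> lipc P f" using p1 assms(5) n by simp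
        then have "\<bar>g p - g x\<bar> \<le> lipc P f * dist p x" using False by (simp add: divide_le_eq)
        then show ?thesis using assms(5) p by (auto simp: abs_le_iff)
      qed
      ultimately show ?thesis by auto
    qed
    then show "- supn P f \<le> g x" "\<And>p. p \<in> P \<Longrightarrow> f p - lipc P f * dist p x \<le> g x" by auto
  qed
  have "Max ((\<lambda>p. f p - lipc P f * dist p x) ` P) \<le> g x"
    using up assms(2) P by (subst Max_le_iff) auto
  then show ?thesis using lw assms(6) by (simp add: ext_op_def)
qed

lemma ext_star_extp:
  assumes "f \<in> ext_star N P" "finite P" "P \<subseteq> S"
  shows "ext_op S P f \<in> extp (ballB N S)"
proof -
  let ?F = "ext_op S P f"
  have fB: "f \<in> ballB N P" using ext_star_in[OF assms(1)] by (rule extp_sub)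
  have B: "f \<in> BLsp P" using fB by (rule ballB_BLsp)
  have P: "P \<noteq> {}" using ext_star_ne[OF assms(1)] .
  note pr = ext_op_props[OF assms(2) P assms(3) B]
  have FB: "?F \<in> ballB N S" using ext_star_inB[OF assms] by (simp add: ballB_char)
  have vf: "\<And>x. x \<notin> P \<Longrightarrow> f x = 0" using fB by (simp add: ballB_char inB_def)
  show ?thesis unfolding extp_def
  proof (intro CollectI conjI FB ballI allI impI)
    fix g h t assume g: "g \<in> ballB N S" and h: "h \<in> ballB N S"
      and th: "0 < t \<and> t < 1 \<and> ?F = (\<lambda>x. t * g x + (1 - t) * h x)"
    have gi: "inB N S g" and hi: "inB N S h" using g h by (auto simp: ballB_char)
    let ?g = "\<lambda>x. if x \<in> P then g x else 0" and ?h = "\<lambda>x. if x \<in> P then h x else 0"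
    have gP: "?g \<in> ballB N P" "?h \<in> ballB N P" using inB_restrict[OF gi assms(3)] inB_restrict[OF hi assms(3)]
      by (auto simp: ballB_char)
    have Fx: "\<And>x. ?F x = t * g x + (1 - t) * h x" using th by metis
    have "\<And>x. f x = t * ?g x + (1 - t) * ?h x"
    proof -
      fix x show "f x = t * ?g x + (1 - t) * ?h x"
      proof (cases "x \<in> P")
        case True then show ?thesis using pr(4)[OF True] Fx[of x] by simp
      qed (simp add: vf)
    qed
    then have "?g = ?h" using extpD[OF ext_star_in[OF assms(1)] gP] th by blast
    then have ghP: "\<And>p. p \<in> P \<Longrightarrow> g p = h p" by (metis (mono_tags, lifting))
    have gf: "\<forall>p\<in>P. g p = f p" "\<forall>p\<in>P. h p = f p"
      using ghP pr(4) Fx by (auto simp: algebra_simps)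
    show "g = h"
    proof
      fix x show "g x = h x"
      proof (cases "x \<in> S")
        case True
        have "?F x \<le> g x" "?F x \<le> h x"
          using ext_star_lower[OF assms gi gf(1) True] ext_star_lower[OF assms hi gf(2) True] by auto
        then show ?thesis using pinch_le[OF _ _ Fx[of x]] th by auto
      next
        case False then show ?thesis using gi hi by (simp add: inB_def)
      qed
    qed
  qed
qed

lemma hP_props:
  assumes "finite P" "P \<noteq> {}" "P \<subseteq> S"
  shows "inB FM S (hP S P)" "\<And>p. p \<in> P \<Longrightarrow> hP S P p = 1"
proof -
  let ?M = "\<lambda>x. Max ((\<lambda>p. (\<lambda>_. 1::real) p - 1 * dist p x) ` P)"
  have e: "x \<in> S \<Longrightarrow> hP S P x = max (-1) (?M x)" for x by (simp add: hP_def dist_commute)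
  have Mup: "?M x \<le> 1" for x using assms by (subst Max_le_iff) auto
  have lip: "\<bar>hP S P x - hP S P y\<bar> \<le> dist x y" if "x \<in> S" "y \<in> S" for x y
  proof -
    have 1: "?M x \<le> ?M y + 1 * dist x y" by (rule Maxlip[OF assms(1,2)]) simp
    have 2: "?M y \<le> ?M x + 1 * dist x y" using Maxlip[OF assms(1,2), where x=y and y=x and L=1] by (simp add: dist_commute)
    show ?thesis using e[OF that(1)] e[OF that(2)] 1 2 by (auto simp: max_def abs_le_iff)
  qed
  have ab: "\<bar>hP S P x\<bar> \<le> 1" if "x \<in> S" for x using e[OF that] Mup[of x] by (simp add: abs_le_iff)
  have v: "x \<notin> S \<Longrightarrow> hP S P x = 0" for x by (simp add: hP_def)
  show "inB FM S (hP S P)" using ab v lip by (simp add: inB_def)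
  show "hP S P p = 1" if p: "p \<in> P" for p
  proof -
    have "1 - 1 * dist p p \<le> ?M p" by (rule Max_ge[OF _ imageI[OF p]]) (use assms in auto)
    then show ?thesis using e[of p] Mup[of p] p assms(3) by auto
  qed
qed

lemma hP_extp:
  assumes "finite P" "P \<noteq> {}" "P \<subseteq> S"
  shows "hP S P \<in> extp (ballB FM S)"
proof -
  note hp = hP_props[OF assms]
  show ?thesis unfolding extp_def
  proof (intro CollectI conjI ballI allI impI)
    show "hP S P \<in> ballB FM S" using hp by (simp add: ballB_char)
    fix g h t assume g: "g \<in> ballB FM S" and h: "h \<in> ballB FM S"
      and th: "0 < t \<and> t < 1 \<and> hP S P = (\<lambda>x. t * g x + (1 - t) * h x)"
    have gi: "inB FM S g" and hi: "inB FM S h" using g h by (auto simp: ballB_char)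
    have Fx: "\<And>x. hP S P x = t * g x + (1 - t) * h x" using th by metis
    have g1: "g p = 1" "h p = 1" if p: "p \<in> P" for p
    proof -
      have "g p \<le> 1" "h p \<le> 1" using inB_abs[OF gi] inB_abs[OF hi] p assms(3) by (auto simp: abs_le_iff)
      then show "g p = 1" "h p = 1" using pinch_ge[OF _ _ Fx[of p]] th hp(2)[OF p] by auto
    qed
    have low: "hP S P x \<le> k x" if k: "inB FM S k" "\<forall>p\<in>P. k p = 1" and x: "x \<in> S" for k x
    proof -
      have "- 1 \<le> k x" using inB_abs[OF k(1) x] by simp
      moreover have "1 - dist x p \<le> k x" if p: "p \<in> P" for p
        using inB_lip1[OF k(1), of p x] p x assms(3) k(2) by (auto simp: abs_le_iff dist_commute)
      ultimately show ?thesis using x assms by (simp add: hP_def Max_le_iff)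
    qed
    show "g = h"
    proof
      fix x show "g x = h x"
      proof (cases "x \<in> S")
        case True
        have "hP S P x \<le> g x" "hP S P x \<le> h x" using low[OF gi _ True] low[OF hi _ True] g1 by auto
        then show ?thesis using pinch_le[OF _ _ Fx[of x]] th by auto
      next
        case False then show ?thesis using gi hi by (simp add: inB_def)
      qed
    qed
  qed
qed

lemma triv_extp:
  assumes "inB N S f" "\<forall>x\<in>S. \<bar>f x\<bar> = 1"
  shows "f \<in> extp (ballB N S)"
  unfolding extp_def
proof (intro CollectI conjI ballI allI impI)
  show "f \<in> ballB N S" using assms by (simp add: ballB_char)
  fix g h t assume g: "g \<in> ballB N S" and h: "h \<in> ballB N S"
    and th: "0 < t \<and> t < 1 \<and> f = (\<lambda>x. t * g x + (1 - t) * h x)"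
  have gi: "inB N S g" and hi: "inB N S h" using g h by (auto simp: ballB_char)
  have Fx: "\<And>x. f x = t * g x + (1 - t) * h x" using th by metis
  show "g = h"
  proof
    fix x show "g x = h x"
    proof (cases "x \<in> S")
      case True
      have b: "\<bar>g x\<bar> \<le> 1" "\<bar>h x\<bar> \<le> 1" using inB_abs[OF gi True] inB_abs[OF hi True] by auto
      show ?thesis
      proof (cases "f x = 1")
        case True
        then show ?thesis using pinch_ge[OF _ _ Fx[of x]] th b by (auto simp: abs_le_iff)
      next
        case False
        then have "f x = -1" using assms(2) True by (auto simp: abs_if split: if_splits)
        then show ?thesis using pinch_le[OF _ _ Fx[of x]] th b by (auto simp: abs_le_iff)
      qed
    next
      case False then show ?thesis using gi hi by (simp add: inB_def)
    qed
  qed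
qed

lemma E_sub_extp: "E_set N S \<subseteq> extp (ballB N S)"
proof (cases N)
  case FM
  show ?thesis
  proof
    fix g assume "g \<in> E_set N S"
    then consider (a) P f where "finite P" "P \<subseteq> S" "f \<in> ext_star FM P" "g = ext_op S P f"
      | (b) "g \<in> ballB FM S" "\<forall>x\<in>S. \<bar>g x\<bar> = 1"
      | (c) P where "finite P" "P \<noteq> {}" "P \<subseteq> S" "g = hP S P"
      unfolding FM E_set_def by auto
    then show "g \<in> extp (ballB N S)"
    proof cases
      case a then show ?thesis using ext_star_extp FM by auto
    next
      case b then show ?thesis using triv_extp FM by (auto simp: ballB_char)
    next
      case c then show ?thesis using hP_extp FM by auto
    qed
  qed
next
  case BL
  have "oneS S \<in> extp (ballB BL S)" "(\<lambda>x. - oneS S x) \<in> extp (ballB BL S)"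
    by (rule triv_extp[OF oneS_inB(1)], simp add: oneS_def, rule triv_extp[OF oneS_inB(2)], simp add: oneS_def)
  then show ?thesis unfolding BL E_set_def
    using ext_star_extp by auto
qed


definition Kset :: "'a set \<Rightarrow> (('a \<Rightarrow> real) \<Rightarrow> real) set \<Rightarrow> ('a \<Rightarrow> real) set" where
  "Kset P Cs = {f. (\<forall>x. x \<notin> P \<longrightarrow> f x = 0) \<and> (\<forall>c\<in>Cs. c f \<le> 1)}"

definition lin :: "(('a \<Rightarrow> real) \<Rightarrow> real) \<Rightarrow> bool" where
  "lin c \<longleftrightarrow> (\<forall>f g a b. c (\<lambda>x. a * f x + b * g x) = a * c f + b * c g)"

definition cc :: "('a \<Rightarrow> real) set \<Rightarrow> ('a \<Rightarrow> real) set" where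
  "cc X = {f. \<exists>I w. finite I \<and> I \<subseteq> X \<and> (\<forall>e\<in>I. 0 \<le> w e) \<and> sum w I = 1 \<and>
              (\<forall>x. f x = (\<Sum>e\<in>I. w e * e x))}"

lemma lin_comb: "lin c \<Longrightarrow> c (\<lambda>x. a * f x + b * g x) = a * c f + b * c g"
  by (simp add: lin_def)

lemma lin_addsc: "lin c \<Longrightarrow> c (\<lambda>x. f x + s * u x) = c f + s * c u"
  using lin_comb[of c 1 f s u] by simp

lemma lin_neg: "lin c \<Longrightarrow> c (\<lambda>x. - u x) = - c u"
  using lin_comb[of c "-1" u 0 u] by simp

lemma lin_diff: "lin c \<Longrightarrow> c (\<lambda>x. g x - h x) = c g - c h"
  using lin_comb[of c 1 g "-1" h] by simp

lemma cc_single: "f \<in> X \<Longrightarrow> f \<in> cc X"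
  unfolding cc_def by (rule CollectI, rule exI[of _ "{f}"], rule exI[of _ "\<lambda>_. 1"]) auto

lemma cc_comb:
  assumes "f1 \<in> cc X" "f2 \<in> cc X" "0 \<le> a" "a \<le> 1"
  shows "(\<lambda>x. a * f1 x + (1 - a) * f2 x) \<in> cc X"
proof -
  obtain I1 w1 where 1: "finite I1" "I1 \<subseteq> X" "\<forall>e\<in>I1. 0 \<le> w1 e" "sum w1 I1 = 1" "\<forall>x. f1 x = (\<Sum>e\<in>I1. w1 e * e x)"
    using assms(1) unfolding cc_def by blast
  obtain I2 w2 where 2: "finite I2" "I2 \<subseteq> X" "\<forall>e\<in>I2. 0 \<le> w2 e" "sum w2 I2 = 1" "\<forall>x. f2 x = (\<Sum>e\<in>I2. w2 e * e x)"
    using assms(2) unfolding cc_def by blast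
  define v1 where "v1 e = (if e \<in> I1 then w1 e else 0)" for e
  define v2 where "v2 e = (if e \<in> I2 then w2 e else 0)" for e
  define w where "w e = a * v1 e + (1 - a) * v2 e" for e
  let ?I = "I1 \<union> I2"
  have fin: "finite ?I" using 1 2 by auto
  have s1: "(\<Sum>e\<in>?I. v1 e * k e) = (\<Sum>e\<in>I1. w1 e * k e)" for k :: "('a \<Rightarrow> real) \<Rightarrow> real"
    by (rule sum.mono_neutral_cong_right) (use fin in \<open>auto simp: v1_def\<close>)
  have s2: "(\<Sum>e\<in>?I. v2 e * k e) = (\<Sum>e\<in>I2. w2 e * k e)" for k :: "('a \<Rightarrow> real) \<Rightarrow> real"
    by (rule sum.mono_neutral_cong_right) (use fin in \<open>auto simp: v2_def\<close>)
  have "(\<Sum>e\<in>?I. w e * k e) = a * (\<Sum>e\<in>I1. w1 e * k e) + (1 - a) * (\<Sum>e\<in>I2. w2 e * k e)"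
    for k :: "('a \<Rightarrow> real) \<Rightarrow> real"
    by (simp add: w_def distrib_right sum.distrib sum_distrib_left mult.assoc s1[symmetric] s2[symmetric])
  note ws = this
  show ?thesis unfolding cc_def
  proof (intro CollectI exI conjI)
    show "finite ?I" by (rule fin)
    show "?I \<subseteq> X" using 1 2 by auto
    show "\<forall>e\<in>?I. 0 \<le> w e" using 1 2 assms by (auto simp: w_def v1_def v2_def)
    show "sum w ?I = 1" using ws[of "\<lambda>_. 1"] 1 2 by simp
    show "\<forall>x. a * f1 x + (1 - a) * f2 x = (\<Sum>e\<in>?I. w e * e x)"
      using ws 1 2 by simp
  qed
qed

lemma move:
  assumes fin: "finite Cs" and ln: "\<forall>c\<in>Cs. lin c"
    and bnd: "\<forall>g\<in>Kset P Cs. \<forall>x\<in>P. \<bar>g x\<bar> \<le> 1"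
    and f: "f \<in> Kset P Cs" and u: "\<forall>x. x \<notin> P \<longrightarrow> u x = 0" and x0: "x0 \<in> P" "u x0 \<noteq> 0"
    and act: "\<forall>c\<in>Cs. c f = 1 \<longrightarrow> c u = 0"
  shows "\<exists>s>0. (\<lambda>x. f x + s * u x) \<in> Kset P Cs \<and>
     {c\<in>Cs. c f = 1} \<subset> {c\<in>Cs. c (\<lambda>x. f x + s * u x) = 1}"
proof -
  define W where "W = {c\<in>Cs. c u > 0}"
  have fK: "\<forall>x. x \<notin> P \<longrightarrow> f x = 0" "\<forall>c\<in>Cs. c f \<le> 1" using f by (auto simp: Kset_def)
  have inK: "(\<lambda>x. f x + s * u x) \<in> Kset P Cs" if "0 \<le> s" "\<forall>c\<in>W. s * c u \<le> 1 - c f" for s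
  proof -
    have "c (\<lambda>x. f x + s * u x) \<le> 1" if c: "c \<in> Cs" for c
    proof (cases "c \<in> W")
      case True then show ?thesis using \<open>\<forall>c\<in>W. s * c u \<le> 1 - c f\<close> lin_addsc ln c by fastforce
    next
      case False
      then have "c u \<le> 0" using c by (auto simp: W_def)
      then have "s * c u \<le> 0" using \<open>0 \<le> s\<close> by (simp add: mult_nonneg_nonpos)
      then show ?thesis using lin_addsc[of c f s u] ln c fK by fastforce
    qed
    then show ?thesis using fK u by (auto simp: Kset_def)
  qed
  have Wne: "W \<noteq> {}"
  proof
    assume W: "W = {}"
    define s where "s = 3 / \<bar>u x0\<bar>"
    have s0: "0 < s" using x0 by (simp add: s_def)
    have "(\<lambda>x. f x + s * u x) \<in> Kset P Cs" using inK[of s] W s0 by auto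
    then have "\<bar>f x0 + s * u x0\<bar> \<le> 1" using bnd x0 by auto
    moreover have "\<bar>f x0\<bar> \<le> 1" using bnd f x0 by auto
    moreover have "\<bar>s * u x0\<bar> = 3" using x0 by (simp add: s_def abs_mult)
    ultimately show False by (smt (verit))
  qed
  have Wfin: "finite W" using fin by (simp add: W_def)
  have Wpos: "0 < (1 - c f) / c u" if "c \<in> W" for c
  proof -
    have "c f \<noteq> 1" using act that by (auto simp: W_def)
    then have "c f < 1" using fK that by (auto simp: W_def order_le_less)
    then show ?thesis using that by (auto simp: W_def)
  qed
  define s where "s = Min ((\<lambda>c. (1 - c f) / c u) ` W)"
  have s0: "0 < s" unfolding s_def using Wfin Wne Wpos by (subst Min_gr_iff) auto
  have sle: "s \<le> (1 - c f) / c u" if "c \<in> W" for c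
    unfolding s_def using Wfin that by (intro Min_le) auto
  have "s \<in> (\<lambda>c. (1 - c f) / c u) ` W" unfolding s_def using Wfin Wne by (intro Min_in) auto
  then obtain cs where cs: "cs \<in> W" "s = (1 - cs f) / cs u" by auto
  have K: "(\<lambda>x. f x + s * u x) \<in> Kset P Cs"
  proof (rule inK)
    show "0 \<le> s" using s0 by simp
    show "\<forall>c\<in>W. s * c u \<le> 1 - c f"
    proof
      fix c assume c: "c \<in> W"
      then have "0 < c u" by (simp add: W_def)
      then show "s * c u \<le> 1 - c f" using sle[OF c] by (simp add: le_divide_eq)
    qed
  qed
  have sub: "{c\<in>Cs. c f = 1} \<subseteq> {c\<in>Cs. c (\<lambda>x. f x + s * u x) = 1}"
    using act ln lin_addsc by fastforce
  have "cs \<in> {c\<in>Cs. c (\<lambda>x. f x + s * u x) = 1}"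
  proof -
    have "0 < cs u" using cs by (simp add: W_def)
    then have "cs f + s * cs u = 1" using cs by simp
    then show ?thesis using cs ln lin_addsc[of cs f s u] by (auto simp: W_def)
  qed
  moreover have "cs \<notin> {c\<in>Cs. c f = 1}" using Wpos[OF cs(1)] by auto
  ultimately show ?thesis using s0 K sub by blast
qed

lemma minkowski:
  assumes fin: "finite Cs" and ln: "\<forall>c\<in>Cs. lin c"
    and bnd: "\<forall>g\<in>Kset P Cs. \<forall>x\<in>P. \<bar>g x\<bar> \<le> 1"
  shows "f \<in> Kset P Cs \<Longrightarrow> f \<in> cc (extp (Kset P Cs))"
proof -
  let ?K = "Kset P Cs"
  let ?act = "\<lambda>f. {c\<in>Cs. c f = 1}"
  have "\<forall>f. f \<in> ?K \<longrightarrow> card (Cs - ?act f) = n \<longrightarrow> f \<in> cc (extp ?K)" for n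
  proof (induction n rule: less_induct)
    case (less n)
    show ?case
    proof (intro allI impI)
      fix f assume f: "f \<in> ?K" and n: "card (Cs - ?act f) = n"
      show "f \<in> cc (extp ?K)"
      proof (cases "f \<in> extp ?K")
        case True then show ?thesis by (rule cc_single)
      next
        case False
        then obtain g h t where gh: "g \<in> ?K" "h \<in> ?K" "0 < t" "t < 1"
          "f = (\<lambda>x. t * g x + (1 - t) * h x)" "g \<noteq> h"
          using f unfolding extp_def by blast
        define u where "u x = g x - h x" for x
        obtain x0 where x0: "u x0 \<noteq> 0" using gh(6) by (auto simp: u_def fun_eq_iff)
        have uP: "\<forall>x. x \<notin> P \<longrightarrow> u x = 0" using gh(1,2) by (auto simp: Kset_def u_def)
        then have x0P: "x0 \<in> P" using x0 by auto
        have act: "\<forall>c\<in>Cs. c f = 1 \<longrightarrow> c u = 0"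
        proof (intro ballI impI)
          fix c assume c: "c \<in> Cs" "c f = 1"
          have "c f = t * c g + (1 - t) * c h" using gh(5) ln c lin_comb by blast
          moreover have "c g \<le> 1" "c h \<le> 1" using gh(1,2) c by (auto simp: Kset_def)
          ultimately have "c g = 1" "c h = 1" using pinch_ge[of t 1 "c g" "c h"] gh(3,4) c by auto
          then show "c u = 0" using lin_diff[of c g h] ln c by (simp add: u_def[abs_def])
        qed
        have act': "\<forall>c\<in>Cs. c f = 1 \<longrightarrow> c (\<lambda>x. - u x) = 0" using act ln lin_neg by fastforce
        obtain s1 where s1: "s1 > 0" "(\<lambda>x. f x + s1 * u x) \<in> ?K" "?act f \<subset> ?act (\<lambda>x. f x + s1 * u x)"
          using move[OF fin ln bnd f uP x0P x0 act] by blast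
        obtain s2 where s2: "s2 > 0" "(\<lambda>x. f x + s2 * - u x) \<in> ?K" "?act f \<subset> ?act (\<lambda>x. f x + s2 * - u x)"
          using move[OF fin ln bnd f _ x0P _ act', of] uP x0 by auto
        have dec: "card (Cs - ?act k) < n" if "?act f \<subset> ?act k" for k
        proof -
          have "Cs - ?act k \<subset> Cs - ?act f" using that by auto
          then have "card (Cs - ?act k) < card (Cs - ?act f)" by (rule psubset_card_mono[rotated]) (use fin in auto)
          then show ?thesis using n by simp
        qed
        have c1: "(\<lambda>x. f x + s1 * u x) \<in> cc (extp ?K)" using less.IH[OF dec[OF s1(3)]] s1(2) by blast
        have c2: "(\<lambda>x. f x + s2 * - u x) \<in> cc (extp ?K)" using less.IH[OF dec[OF s2(3)]] s2(2) by blast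
        define a where "a = s2 / (s1 + s2)"
        have a: "0 \<le> a" "a \<le> 1" using s1 s2 by (auto simp: a_def)
        have "(\<lambda>x. a * (f x + s1 * u x) + (1 - a) * (f x + s2 * - u x)) = f"
        proof
          fix x
          have "1 - a = s1 / (s1 + s2)" using s1 s2 by (simp add: a_def field_simps)
          then have "a * s1 = (1 - a) * s2" using s1 s2 by (simp add: a_def)
          moreover have "a * (f x + s1 * u x) + (1 - a) * (f x + s2 * - u x) = f x + (a * s1 - (1 - a) * s2) * u x"
            by (simp add: algebra_simps)
          ultimately show "a * (f x + s1 * u x) + (1 - a) * (f x + s2 * - u x) = f x" by simp
        qed
        then show ?thesis using cc_comb[OF c1 c2 a] by simp
      qed
    qed
  qed
  then show "f \<in> ?K \<Longrightarrow> f \<in> cc (extp ?K)" by blast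
qed


definition CsFM :: "'a::metric_space set \<Rightarrow> (('a \<Rightarrow> real) \<Rightarrow> real) set" where
  "CsFM P = (\<lambda>x f. f x) ` P \<union> (\<lambda>x f. - f x) ` P \<union>
     (\<lambda>(a,b) f. (f a - f b) / dist a b) ` {(a,b). a \<in> P \<and> b \<in> P \<and> a \<noteq> b}"

definition CsBL :: "'a::metric_space set \<Rightarrow> (('a \<Rightarrow> real) \<Rightarrow> real) set" where
  "CsBL P = (\<lambda>x f. f x) ` P \<union> (\<lambda>x f. - f x) ` P \<union>
     (\<lambda>(x,a,b,s,t) f. s * f x + t * ((f a - f b) / dist a b)) `
        {(x,a,b,s,t). x \<in> P \<and> a \<in> P \<and> b \<in> P \<and> a \<noteq> b \<and> s \<in> {-1,1} \<and> t \<in> {-1,1::real}}"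

definition CsN :: "bl_norm \<Rightarrow> 'a::metric_space set \<Rightarrow> (('a \<Rightarrow> real) \<Rightarrow> real) set" where
  "CsN N P = (case N of FM \<Rightarrow> CsFM P | BL \<Rightarrow> CsBL P)"

lemma CsFM_cases:
  assumes "c \<in> CsFM P"
  obtains x where "x\<in>P" "c = (\<lambda>f. f x)" | x where "x\<in>P" "c = (\<lambda>f. - f x)"
  | a b where "a\<in>P" "b\<in>P" "a\<noteq>b" "c = (\<lambda>f. (f a - f b)/dist a b)"
proof -
  from assms[unfolded CsFM_def] consider (1) "c \<in> (\<lambda>x f. f x) ` P" | (2) "c \<in> (\<lambda>x f. - f x) ` P"
    | (3) "c \<in> (\<lambda>(a,b) f. (f a - f b) / dist a b) ` {(a,b). a \<in> P \<and> b \<in> P \<and> a \<noteq> b}"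
    by blast
  then show ?thesis
  proof cases
    case 1 then show ?thesis using that(1) by blast
  next
    case 2 then show ?thesis using that(2) by blast
  next
    case 3
    then obtain p where p: "p \<in> {(a,b). a \<in> P \<and> b \<in> P \<and> a \<noteq> b}"
      "c = (\<lambda>(a,b) f. (f a - f b) / dist a b) p" by blast
    obtain a b where pe: "p = (a,b)" by (cases p)
    show ?thesis
      by (rule that(3)[of a b]) (use p[unfolded pe] in \<open>simp_all only: mem_Collect_eq prod.case\<close>, simp_all)
  qed
qed

lemma CsBL_cases:
  assumes "c \<in> CsBL P"
  obtains x where "x\<in>P" "c = (\<lambda>f. f x)" | x where "x\<in>P" "c = (\<lambda>f. - f x)"
  | x a b s t where "x\<in>P" "a\<in>P" "b\<in>P" "a\<noteq>b" "s\<in>{-1,1}" "t\<in>{-1,1}" "c = (\<lambda>f. s * f x + t * ((f a - f b)/dist a b))"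
proof -
  from assms[unfolded CsBL_def] consider (1) "c \<in> (\<lambda>x f. f x) ` P" | (2) "c \<in> (\<lambda>x f. - f x) ` P"
    | (3) "c \<in> (\<lambda>(x,a,b,s,t) f. s * f x + t * ((f a - f b) / dist a b)) `
        {(x,a,b,s,t). x \<in> P \<and> a \<in> P \<and> b \<in> P \<and> a \<noteq> b \<and> s \<in> {-1,1} \<and> t \<in> {-1,1::real}}"
    by blast
  then show ?thesis
  proof cases
    case 1 then show ?thesis using that(1) by blast
  next
    case 2 then show ?thesis using that(2) by blast
  next
    case 3
    then obtain p where p: "p \<in> {(x,a,b,s,t). x \<in> P \<and> a \<in> P \<and> b \<in> P \<and> a \<noteq> b \<and> s \<in> {-1,1} \<and> t \<in> {-1,1::real}}"
      "c = (\<lambda>(x,a,b,s,t) f. s * f x + t * ((f a - f b) / dist a b)) p" by blast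
    obtain x a b s t where pe: "p = (x,a,b,s,t)" by (cases p)
    show ?thesis
      by (rule that(3)[of x a b s t]) (use p[unfolded pe] in \<open>simp_all only: mem_Collect_eq prod.case\<close>, simp_all)
  qed
qed

lemma all_CsFM:
  "(\<forall>c\<in>CsFM P. c f \<le> 1) \<longleftrightarrow> (\<forall>x\<in>P. \<bar>f x\<bar> \<le> 1) \<and> (\<forall>x\<in>P. \<forall>y\<in>P. \<bar>f x - f y\<bar> \<le> dist x y)"
proof
  assume H: "\<forall>c\<in>CsFM P. c f \<le> 1"
  have 1: "\<forall>x\<in>P. \<bar>f x\<bar> \<le> 1"
  proof
    fix x assume x: "x \<in> P"
    have "(\<lambda>f. f x) \<in> CsFM P" "(\<lambda>f. - f x) \<in> CsFM P" unfolding CsFM_def using x by blast+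
    then have "f x \<le> 1" "- f x \<le> 1" using H by fastforce+
    then show "\<bar>f x\<bar> \<le> 1" by (simp add: abs_le_iff)
  qed
  have "\<bar>f x - f y\<bar> \<le> dist x y" if "x \<in> P" "y \<in> P" for x y
  proof (cases "x = y")
    case False
    have mem: "(\<lambda>f. (f a - f b) / dist a b) \<in> CsFM P" if "a \<in> P" "b \<in> P" "a \<noteq> b" for a b
    proof -
      have "(\<lambda>f. (f a - f b) / dist a b) = (\<lambda>(a,b) f. (f a - f b) / dist a b) (a,b)" by simp
      moreover have "(a,b) \<in> {(a,b). a \<in> P \<and> b \<in> P \<and> a \<noteq> b}" using that by simp
      ultimately have "(\<lambda>f. (f a - f b) / dist a b) \<in> (\<lambda>(a,b) f. (f a - f b) / dist a b) ` {(a,b). a \<in> P \<and> b \<in> P \<and> a \<noteq> b}"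
        by (rule image_eqI)
      then show ?thesis unfolding CsFM_def by (rule UnI2)
    qed
    have "(\<lambda>f. (f x - f y) / dist x y) \<in> CsFM P" "(\<lambda>f. (f y - f x) / dist y x) \<in> CsFM P"
      using mem that False by auto
    then have "(f x - f y) / dist x y \<le> 1" "(f y - f x) / dist y x \<le> 1"
      using H by fastforce+
    then show ?thesis using False by (auto simp: divide_le_eq abs_le_iff dist_commute)
  qed simp
  then show "(\<forall>x\<in>P. \<bar>f x\<bar> \<le> 1) \<and> (\<forall>x\<in>P. \<forall>y\<in>P. \<bar>f x - f y\<bar> \<le> dist x y)" using 1 by auto
next
  assume H: "(\<forall>x\<in>P. \<bar>f x\<bar> \<le> 1) \<and> (\<forall>x\<in>P. \<forall>y\<in>P. \<bar>f x - f y\<bar> \<le> dist x y)"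
  have "(f a - f b) / dist a b \<le> 1" if "a \<in> P" "b \<in> P" "a \<noteq> b" for a b
    using H that by (auto simp: divide_le_eq abs_le_iff)
  show "\<forall>c\<in>CsFM P. c f \<le> 1"
  proof
    fix c assume "c \<in> CsFM P"
    then show "c f \<le> 1"
    proof (cases rule: CsFM_cases)
      case (3 a b) then show ?thesis using \<open>\<And>a b. a \<in> P \<Longrightarrow> b \<in> P \<Longrightarrow> a \<noteq> b \<Longrightarrow> (f a - f b) / dist a b \<le> 1\<close> by simp
    qed (use H in \<open>auto simp: abs_le_iff\<close>)
  qed
qed

lemma sgn_trick:
  fixes v r :: real
  shows "(\<forall>s\<in>{-1,1}. \<forall>t\<in>{-1,1}. s * v + t * r \<le> 1) \<longleftrightarrow> \<bar>v\<bar> + \<bar>r\<bar> \<le> 1"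
  by (cases "0 \<le> v"; cases "0 \<le> r") auto

lemma all_CsBL:
  "(\<forall>c\<in>CsBL P. c f \<le> 1) \<longleftrightarrow> (\<forall>x\<in>P. \<bar>f x\<bar> \<le> 1) \<and>
     (\<forall>x\<in>P. \<forall>a\<in>P. \<forall>b\<in>P. a \<noteq> b \<longrightarrow> \<bar>f x\<bar> + \<bar>f a - f b\<bar> / dist a b \<le> 1)"
proof
  assume H: "\<forall>c\<in>CsBL P. c f \<le> 1"
  have 1: "\<forall>x\<in>P. \<bar>f x\<bar> \<le> 1"
  proof
    fix x assume x: "x \<in> P"
    have "(\<lambda>f. f x) \<in> CsBL P" "(\<lambda>f. - f x) \<in> CsBL P" unfolding CsBL_def using x by blast+
    then have "f x \<le> 1" "- f x \<le> 1" using H by fastforce+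
    then show "\<bar>f x\<bar> \<le> 1" by (simp add: abs_le_iff)
  qed
  have "\<bar>f x\<bar> + \<bar>(f a - f b) / dist a b\<bar> \<le> 1" if "x \<in> P" "a \<in> P" "b \<in> P" "a \<noteq> b" for x a b
  proof -
    have "\<forall>s\<in>{-1,1}. \<forall>t\<in>{-1,1}. s * f x + t * ((f a - f b) / dist a b) \<le> 1"
    proof (intro ballI)
      fix s t :: real assume st: "s \<in> {-1,1}" "t \<in> {-1,1}"
      have "(\<lambda>f. s * f x + t * ((f a - f b) / dist a b)) \<in> CsBL P"
        unfolding CsBL_def using that st by (intro UnI2) (rule image_eqI[of _ _ "(x,a,b,s,t)"], auto)
      then show "s * f x + t * ((f a - f b) / dist a b) \<le> 1" using H by fastforce
    qed
    then show ?thesis by (simp only: sgn_trick)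
  qed
  then show "(\<forall>x\<in>P. \<bar>f x\<bar> \<le> 1) \<and>
     (\<forall>x\<in>P. \<forall>a\<in>P. \<forall>b\<in>P. a \<noteq> b \<longrightarrow> \<bar>f x\<bar> + \<bar>f a - f b\<bar> / dist a b \<le> 1)" using 1 by auto
next
  assume H: "(\<forall>x\<in>P. \<bar>f x\<bar> \<le> 1) \<and>
     (\<forall>x\<in>P. \<forall>a\<in>P. \<forall>b\<in>P. a \<noteq> b \<longrightarrow> \<bar>f x\<bar> + \<bar>f a - f b\<bar> / dist a b \<le> 1)"
  have "s * f x + t * ((f a - f b) / dist a b) \<le> 1"
    if "x \<in> P" "a \<in> P" "b \<in> P" "a \<noteq> b" "s \<in> {-1,1}" "t \<in> {-1,1}" for x a b s t
  proof -
    have "\<bar>f x\<bar> + \<bar>(f a - f b) / dist a b\<bar> \<le> 1" using H that by simp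
    then show ?thesis using that(5,6) sgn_trick[of "f x" "(f a - f b) / dist a b"] by blast
  qed
  note st = this
  show "\<forall>c\<in>CsBL P. c f \<le> 1"
  proof
    fix c assume "c \<in> CsBL P"
    then show "c f \<le> 1"
    proof (cases rule: CsBL_cases)
      case (3 x a b s t) then show ?thesis using st[of x a b s t] by simp
    qed (use H in \<open>auto simp: abs_le_iff\<close>)
  qed
qed

lemma ballB_K: "ballB N P = Kset P (CsN N P)"
proof (cases N)
  case FM
  show ?thesis unfolding ballB_char Kset_def CsN_def FM using all_CsFM[of P]
    by (auto simp: inB_def)
next
  case BL
  show ?thesis unfolding ballB_char Kset_def CsN_def BL using all_CsBL[of P]
    by (auto simp: inB_def)
qed

lemma lin_eval: "lin (\<lambda>f. f x)" "lin (\<lambda>f. - f x)" by (auto simp: lin_def algebra_simps)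

lemma lin_ratio: "lin (\<lambda>f. s * f x + t * ((f a - f b) / d))" "lin (\<lambda>f. (f a - f b) / d)"
  by (auto simp: lin_def algebra_simps diff_divide_distrib add_divide_distrib)

lemma CsN_fin: "finite P \<Longrightarrow> finite (CsN N P)"
proof -
  assume P: "finite P"
  have f1: "finite {(a,b). a \<in> P \<and> b \<in> P \<and> a \<noteq> b}"
    by (rule finite_subset[of _ "P \<times> P"]) (use P in auto)
  have f2: "finite {(x,a,b,s,t). x \<in> P \<and> a \<in> P \<and> b \<in> P \<and> a \<noteq> b \<and> s \<in> {-1,1} \<and> t \<in> {-1,1::real}}"
    by (rule finite_subset[of _ "P \<times> P \<times> P \<times> {-1,1} \<times> {-1,1}"]) (use P in auto)
  show ?thesis using P f1 f2 by (cases N) (auto simp: CsN_def CsFM_def CsBL_def)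
qed

lemma lin_tuple: "lin ((\<lambda>(x,a,b,s,t) f. s * f x + t * ((f a - f b) / dist a b)) p)"
  by (cases p) (simp only: prod.case, rule lin_ratio)

lemma lin_pair: "lin ((\<lambda>(a,b) f. (f a - f b) / dist a b) p)"
  by (cases p) (simp only: prod.case, rule lin_ratio)

lemma CsN_lin: "\<forall>c\<in>CsN N P. lin c"
proof
  fix c assume c: "c \<in> CsN N P"
  show "lin c"
  proof (cases N)
    case FM
    then have "c \<in> CsFM P" using c by (simp add: CsN_def)
    then show ?thesis by (cases rule: CsFM_cases) (simp_all add: lin_eval lin_ratio)
  next
    case BL
    then have "c \<in> CsBL P" using c by (simp add: CsN_def)
    then show ?thesis by (cases rule: CsBL_cases) (simp_all only: lin_eval lin_ratio)
  qed
qed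

lemma ballB_cc:
  assumes "finite P" "f \<in> ballB N P"
  shows "f \<in> cc (extp (ballB N P))"
proof -
  have bnd: "\<forall>g\<in>Kset P (CsN N P). \<forall>x\<in>P. \<bar>g x\<bar> \<le> 1"
    using ballB_K[of N P] by (auto simp: ballB_char inB_def)
  show ?thesis unfolding ballB_K
    by (rule minkowski[OF CsN_fin[OF assms(1)] CsN_lin bnd]) (use assms(2) ballB_K in auto)
qed

lemma ext_to_E:
  assumes "finite P" "P \<subseteq> S" "e \<in> extp (ballB N P)"
  shows "\<exists>g\<in>E_set N S. \<forall>x\<in>P. g x = e x"
proof (cases "e \<in> ext_star N P")
  case True
  have P: "P \<noteq> {}" using ext_star_ne[OF True] .
  have B: "e \<in> BLsp P" using extp_sub[OF assms(3)] by (rule ballB_BLsp)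
  have "ext_op S P e \<in> (\<Union>P\<in>{P. finite P \<and> P \<subseteq> S}. ext_op S P ` ext_star N P)" using True assms(1,2) by blast
  then have "ext_op S P e \<in> E_set N S" by (cases N) (simp_all add: E_set_def)
  then show ?thesis using ext_op_props(4)[OF assms(1) P assms(2) B] by blast
next
  case False
  then have tr: "\<forall>x\<in>P. \<bar>e x\<bar> = 1" using assms(3) by (auto simp: ext_star_def)
  have ei: "inB N P e" using extp_sub[OF assms(3)] by (simp add: ballB_char)
  show ?thesis
  proof (cases N)
    case BL
    show ?thesis
    proof (cases "P = {}")
      case True
      have "oneS S \<in> E_set N S" using BL by (simp add: E_set_def)
      then show ?thesis using True by blast
    next
      case False
      then obtain p0 where p0: "p0 \<in> P" by auto
      have const: "e x = e p0" if x: "x \<in> P" for x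
      proof (cases "x = p0")
        case False
        have "\<bar>e x\<bar> + \<bar>e x - e p0\<bar> / dist x p0 \<le> 1" using inB_BL[OF ei[unfolded BL] x x p0 False] .
        then have "\<bar>e x - e p0\<bar> / dist x p0 \<le> 0" using tr x by simp
        then have "\<bar>e x - e p0\<bar> \<le> 0" using False by (simp add: divide_le_0_iff)
        then show ?thesis by simp
      qed simp
      show ?thesis
      proof (cases "e p0 = 1")
        case True
        have "oneS S \<in> E_set N S" using BL by (simp add: E_set_def)
        moreover have "\<forall>x\<in>P. oneS S x = e x" using const p0 True assms(2) by (auto simp: oneS_def)
        ultimately show ?thesis by blast
      next
        case False
        then have "e p0 = -1" using tr p0 by (auto simp: abs_if split: if_splits)
        have "(\<lambda>x. - oneS S x) \<in> E_set N S" using BL by (simp add: E_set_def)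
        moreover have "\<forall>x\<in>P. - oneS S x = e x" using const p0 \<open>e p0 = -1\<close> assms(2) by (auto simp: oneS_def)
        ultimately show ?thesis by (intro bexI[of _ "\<lambda>x. - oneS S x"]) simp_all
      qed
    qed
  next
    case FM
    define Q where "Q = {x\<in>P. e x = 1}"
    have em: "x \<in> P \<Longrightarrow> x \<notin> Q \<Longrightarrow> e x = -1" for x using tr by (auto simp: Q_def abs_if split: if_splits)
    show ?thesis
    proof (cases "Q = {}")
      case True
      have "(\<lambda>x. - oneS S x) \<in> {f \<in> ballB FM S. \<forall>x\<in>S. \<bar>f x\<bar> = 1}"
        using oneS_inB(2)[of FM S] by (simp add: ballB_char oneS_def)
      then have "(\<lambda>x. - oneS S x) \<in> E_set N S" using FM unfolding E_set_def by simp
      moreover have "\<forall>x\<in>P. - oneS S x = e x" using em True assms(2) by (auto simp: oneS_def)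
      ultimately show ?thesis by (intro bexI[of _ "\<lambda>x. - oneS S x"]) simp_all
    next
      case False
      have Q: "finite Q" "Q \<noteq> {}" "Q \<subseteq> S" using assms(1,2) False by (auto simp: Q_def)
      have "hP S Q \<in> {hP S P | P. finite P \<and> P \<noteq> {} \<and> P \<subseteq> S}" using Q by blast
      then have "hP S Q \<in> E_set N S" using FM unfolding E_set_def by simp
      moreover have "hP S Q x = e x" if x: "x \<in> P" for x
      proof (cases "x \<in> Q")
        case True then show ?thesis using hP_props(2)[OF Q] by (simp add: Q_def)
      next
        case False
        have "1 - dist x p \<le> -1" if p: "p \<in> Q" for p
        proof -
          have "\<bar>e p - e x\<bar> \<le> dist p x" using inB_lip1[OF ei, of p x] p x by (auto simp: Q_def)
          then show ?thesis using em[OF x False] p by (simp add: Q_def dist_commute)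
        qed
        then have "Max ((\<lambda>p. 1 - dist x p) ` Q) \<le> -1" using Q by (subst Max_le_iff) auto
        then show ?thesis using em[OF x False] x assms(2) by (auto simp: hP_def)
      qed
      ultimately show ?thesis by blast
    qed
  qed
qed


definition nrmc :: "bl_norm \<Rightarrow> 'a::metric_space set \<Rightarrow> real \<Rightarrow> ('a \<Rightarrow> real) \<Rightarrow> bool" where
  "nrmc N S m k \<longleftrightarrow> (\<forall>x\<in>S. \<bar>k x\<bar> \<le> m) \<and>
     (case N of FM \<Rightarrow> (\<forall>a\<in>S. \<forall>b\<in>S. \<bar>k a - k b\<bar> \<le> m * dist a b)
      | BL \<Rightarrow> (\<forall>x\<in>S. \<forall>a\<in>S. \<forall>b\<in>S. a \<noteq> b \<longrightarrow> \<bar>k x\<bar> + \<bar>k a - k b\<bar> / dist a b \<le> m))"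

lemma nrmc_inB: "inB N S g \<Longrightarrow> nrmc N S 1 g"
  by (cases N) (auto simp: nrmc_def inB_def)

lemma nrmc_sum:
  assumes "finite J" "\<forall>e\<in>J. 0 \<le> w e" "\<forall>e\<in>J. nrmc N S 1 (g e)"
  shows "nrmc N S (sum w J) (\<lambda>x. \<Sum>e\<in>J. w e * g e x)"
proof -
  have ab: "\<bar>\<Sum>e\<in>J. w e * g e x\<bar> \<le> (\<Sum>e\<in>J. w e * \<bar>g e x\<bar>)" for x
    using sum_abs[of "\<lambda>e. w e * g e x" J] assms(2) by (simp add: abs_mult)
  have df: "(\<Sum>e\<in>J. w e * g e a) - (\<Sum>e\<in>J. w e * g e b) = (\<Sum>e\<in>J. w e * (g e a - g e b))" for a b
    by (simp add: sum_subtractf[symmetric] right_diff_distrib)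
  have abd: "\<bar>(\<Sum>e\<in>J. w e * g e a) - (\<Sum>e\<in>J. w e * g e b)\<bar> \<le> (\<Sum>e\<in>J. w e * \<bar>g e a - g e b\<bar>)" for a b
    unfolding df using sum_abs[of "\<lambda>e. w e * (g e a - g e b)" J] assms(2) by (simp add: abs_mult)
  have 1: "\<bar>\<Sum>e\<in>J. w e * g e x\<bar> \<le> sum w J" if "x \<in> S" for x
  proof -
    have "(\<Sum>e\<in>J. w e * \<bar>g e x\<bar>) \<le> (\<Sum>e\<in>J. w e * 1)"
      using assms that by (intro sum_mono mult_left_mono) (auto simp: nrmc_def)
    then show ?thesis using ab[of x] by simp
  qed
  show ?thesis
  proof (cases N)
    case FM
    have "\<bar>(\<Sum>e\<in>J. w e * g e a) - (\<Sum>e\<in>J. w e * g e b)\<bar> \<le> sum w J * dist a b" if "a \<in> S" "b \<in> S" for a b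
    proof -
      have "(\<Sum>e\<in>J. w e * \<bar>g e a - g e b\<bar>) \<le> (\<Sum>e\<in>J. w e * dist a b)"
        using assms that FM by (intro sum_mono mult_left_mono) (auto simp: nrmc_def)
      then show ?thesis using abd[of a b] by (simp add: sum_distrib_right)
    qed
    then show ?thesis using 1 FM by (simp add: nrmc_def)
  next
    case BL
    have "\<bar>\<Sum>e\<in>J. w e * g e x\<bar> + \<bar>(\<Sum>e\<in>J. w e * g e a) - (\<Sum>e\<in>J. w e * g e b)\<bar> / dist a b \<le> sum w J"
      if "x \<in> S" "a \<in> S" "b \<in> S" "a \<noteq> b" for x a b
    proof -
      have "\<bar>(\<Sum>e\<in>J. w e * g e a) - (\<Sum>e\<in>J. w e * g e b)\<bar> / dist a b \<le> (\<Sum>e\<in>J. w e * \<bar>g e a - g e b\<bar>) / dist a b"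
        using abd[of a b] by (simp add: divide_right_mono)
      also have "\<dots> = (\<Sum>e\<in>J. w e * (\<bar>g e a - g e b\<bar> / dist a b))" by (simp add: sum_divide_distrib)
      finally have "\<bar>\<Sum>e\<in>J. w e * g e x\<bar> + \<bar>(\<Sum>e\<in>J. w e * g e a) - (\<Sum>e\<in>J. w e * g e b)\<bar> / dist a b
          \<le> (\<Sum>e\<in>J. w e * (\<bar>g e x\<bar> + \<bar>g e a - g e b\<bar> / dist a b))"
        using ab[of x] by (simp add: distrib_left sum.distrib)
      also have "\<dots> \<le> (\<Sum>e\<in>J. w e * 1)"
        using assms that BL by (intro sum_mono mult_left_mono) (auto simp: nrmc_def)
      finally show ?thesis by simp
    qed
    then show ?thesis using 1 BL by (simp add: nrmc_def)
  qed
qed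

lemma nrmc_scale:
  assumes "0 < m" "nrmc N S m k"
  shows "inB N S (\<lambda>x. if x \<in> S then k x / m else 0)"
proof -
  have 1: "\<bar>k x / m\<bar> \<le> 1" if "x \<in> S" for x using assms that by (simp add: nrmc_def divide_le_eq_1)
  show ?thesis
  proof (cases N)
    case FM
    have "\<bar>k a / m - k b / m\<bar> \<le> dist a b" if "a \<in> S" "b \<in> S" for a b
    proof -
      have "\<bar>k a - k b\<bar> \<le> m * dist a b" using assms that FM by (simp add: nrmc_def)
      then have "\<bar>k a - k b\<bar> / m \<le> dist a b" using assms(1) by (simp add: divide_le_eq mult.commute)
      moreover have "\<bar>k a / m - k b / m\<bar> = \<bar>k a - k b\<bar> / m" using assms(1) by (simp add: diff_divide_distrib[symmetric])
      ultimately show ?thesis by simp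
    qed
    then show ?thesis using 1 FM by (simp add: inB_def)
  next
    case BL
    have "\<bar>k x / m\<bar> + \<bar>k a / m - k b / m\<bar> / dist a b \<le> 1" if "x \<in> S" "a \<in> S" "b \<in> S" "a \<noteq> b" for x a b
    proof -
      have "\<bar>k x\<bar> + \<bar>k a - k b\<bar> / dist a b \<le> m" using assms that BL by (simp add: nrmc_def)
      then have "(\<bar>k x\<bar> + \<bar>k a - k b\<bar> / dist a b) / m \<le> 1" using assms(1) by simp
      moreover have "(\<bar>k x\<bar> + \<bar>k a - k b\<bar> / dist a b) / m = \<bar>k x / m\<bar> + \<bar>k a / m - k b / m\<bar> / dist a b"
        using assms(1) by (simp add: add_divide_distrib diff_divide_distrib[symmetric])
      ultimately show ?thesis by simp
    qed
    then show ?thesis using 1 BL by (simp add: inB_def)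
  qed
qed

lemma nrmc_zero: "nrmc N S 0 k \<Longrightarrow> x \<in> S \<Longrightarrow> k x = 0"
  by (simp add: nrmc_def)

lemma inB_convex:
  assumes "finite J" "\<forall>e\<in>J. 0 \<le> w e" "sum w J = 1" "\<forall>e\<in>J. inB N S (g e)"
  shows "inB N S (\<lambda>x. \<Sum>e\<in>J. w e * g e x)"
proof -
  have "nrmc N S 1 (\<lambda>x. \<Sum>e\<in>J. w e * g e x)"
    using nrmc_sum[OF assms(1,2), of N S g] assms(3,4) nrmc_inB by auto
  then have "inB N S (\<lambda>x. if x \<in> S then (\<Sum>e\<in>J. w e * g e x) / 1 else 0)" by (rule nrmc_scale[rotated]) simp
  moreover have "(\<lambda>x. if x \<in> S then (\<Sum>e\<in>J. w e * g e x) / 1 else 0) = (\<lambda>x. \<Sum>e\<in>J. w e * g e x)"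
    using assms(4) by (auto simp: inB_def fun_eq_iff)
  ultimately show ?thesis by simp
qed

lemma ext_comb:
  assumes f: "f \<in> extp (ballB N S)" and fin: "finite Z" and ne: "Z \<noteq> {}"
    and pos: "\<forall>z\<in>Z. 0 < mu z" and s1: "sum mu Z = 1" and h: "\<forall>z\<in>Z. inB N S (h z)"
    and fx: "\<forall>x. f x = (\<Sum>z\<in>Z. mu z * h z x)"
  shows "\<exists>z\<in>Z. f = h z"
proof -
  obtain z0 where z0: "z0 \<in> Z" using ne by auto
  let ?R = "Z - {z0}"
  have split: "(\<Sum>z\<in>Z. k z) = k z0 + (\<Sum>z\<in>?R. k z)" for k :: "_ \<Rightarrow> real"
    using fin z0 by (simp add: sum.remove)
  show ?thesis
  proof (cases "?R = {}")
    case True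
    then have "Z = {z0}" using z0 by auto
    then show ?thesis using fx s1 by (auto simp: fun_eq_iff)
  next
    case False
    then obtain z1 where z1: "z1 \<in> ?R" by auto
    have Rpos: "0 < sum mu ?R"
      using fin z1 pos by (intro sum_pos2[OF _ z1]) (auto intro: less_imp_le)
    define t where "t = mu z0"
    have t: "0 < t" "t < 1" using pos z0 s1 split[of mu] Rpos by (auto simp: t_def)
    define rest where "rest x = (\<Sum>z\<in>?R. (mu z / (1 - t)) * h z x)" for x
    have rsum: "sum (\<lambda>z. mu z / (1 - t)) ?R = 1"
      using split[of mu] s1 t by (simp add: sum_divide_distrib[symmetric] t_def)
    have restB: "inB N S rest" unfolding rest_def
      by (rule inB_convex) (use fin pos h rsum t in auto)
    have fe: "f x = t * h z0 x + (1 - t) * rest x" for x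
    proof -
      have "(1 - t) * rest x = (\<Sum>z\<in>?R. mu z * h z x)"
        using t by (simp add: rest_def sum_distrib_left)
      then show ?thesis using fx split[of "\<lambda>z. mu z * h z x"] by (simp add: t_def)
    qed
    have "h z0 = rest"
      by (rule extpD[OF f _ _ t fe]) (use h z0 restB in \<open>auto simp: ballB_char\<close>)
    then have "f = h z0" using fe by (auto simp: fun_eq_iff algebra_simps)
    then show ?thesis using z0 by blast
  qed
qed

lemma cl_le:
  assumes "continuous_map X euclideanreal p" "continuous_map X euclideanreal q"
  shows "closedin X {G \<in> topspace X. p G \<le> q G}"
proof -
  have "continuous_map X euclideanreal (\<lambda>G. p G - q G)" using assms by (intro continuous_intros)
  moreover have "closedin euclideanreal {..0::real}" by (simp add: closed_closedin[symmetric])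
  ultimately have "closedin X {G \<in> topspace X. p G - q G \<in> {..0}}" by (rule closedin_continuous_map_preimage)
  then show ?thesis by simp
qed

lemma cl_all:
  assumes "\<And>i. i \<in> I \<Longrightarrow> closedin X {G \<in> topspace X. P i G}"
  shows "closedin X {G \<in> topspace X. \<forall>i\<in>I. P i G}"
proof (cases "I = {}")
  case True then show ?thesis by simp
next
  case False
  have "{G \<in> topspace X. \<forall>i\<in>I. P i G} = \<Inter>((\<lambda>i. {G \<in> topspace X. P i G}) ` I)" using False by auto
  then show ?thesis using False assms by (auto intro!: closedin_Inter)
qed

lemma cl_conj:
  "closedin X {G \<in> topspace X. P G} \<Longrightarrow> closedin X {G \<in> topspace X. Q G} \<Longrightarrow> closedin X {G \<in> topspace X. P G \<and> Q G}"
proof -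
  assume a: "closedin X {G \<in> topspace X. P G}" "closedin X {G \<in> topspace X. Q G}"
  have "{G \<in> topspace X. P G \<and> Q G} = {G \<in> topspace X. P G} \<inter> {G \<in> topspace X. Q G}" by blast
  then show ?thesis using closedin_Int[OF a] by simp
qed

lemma cl_cond:
  "(c \<Longrightarrow> closedin X {G \<in> topspace X. P G}) \<Longrightarrow> closedin X {G \<in> topspace X. c \<longrightarrow> P G}"
  by (cases c) auto


lemma floor_cell:
  fixes r v :: real assumes "0 < r"
  shows "\<bar>v - r * of_int \<lfloor>v / r\<rfloor>\<bar> \<le> r"
proof -
  have a: "of_int \<lfloor>v / r\<rfloor> \<le> v / r" "v / r < of_int \<lfloor>v / r\<rfloor> + 1" by linarith+
  have "r * of_int \<lfloor>v / r\<rfloor> \<le> r * (v / r)" using a(1) assms by (intro mult_left_mono) auto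
  moreover have "r * (v / r) \<le> r * (of_int \<lfloor>v / r\<rfloor> + 1)" using a(2) assms by (intro mult_left_mono) auto
  ultimately show ?thesis using assms by (auto simp: abs_le_iff algebra_simps)
qed

lemma finite_cells:
  fixes F :: "'a set" and V :: "real set"
  assumes "finite F" "finite V"
  shows "finite {z::'a \<Rightarrow> real. \<forall>x. (x \<in> F \<longrightarrow> z x \<in> V) \<and> (x \<notin> F \<longrightarrow> z x = 0)}"
proof -
  let ?Z = "{z::'a \<Rightarrow> real. \<forall>x. (x \<in> F \<longrightarrow> z x \<in> V) \<and> (x \<notin> F \<longrightarrow> z x = 0)}"
  have "?Z \<subseteq> (\<lambda>p. \<lambda>x. if x \<in> F then p x else 0) ` (PiE F (\<lambda>_. V))"
  proof
    fix z assume z: "z \<in> ?Z"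
    have "z = (\<lambda>x. if x \<in> F then restrict z F x else 0)" using z by (auto simp: fun_eq_iff)
    moreover have "restrict z F \<in> PiE F (\<lambda>_. V)" using z by auto
    ultimately show "z \<in> (\<lambda>p. \<lambda>x. if x \<in> F then p x else 0) ` (PiE F (\<lambda>_. V))" by blast
  qed
  moreover have "finite (PiE F (\<lambda>_. V))" using assms by (simp add: finite_PiE)
  ultimately show ?thesis by (meson finite_imageI finite_subset)
qed

lemma E_inB: "g \<in> E_set N S \<Longrightarrow> inB N S g"
  using E_sub_extp[of N S] extp_sub by (auto simp: ballB_char)

lemma inB_abs_all: "inB N S g \<Longrightarrow> \<bar>g x\<bar> \<le> 1"
  by (cases "x \<in> S") (auto simp: inB_def)


lemma exG:
  fixes f :: "'a::metric_space \<Rightarrow> real" and Z :: "('a \<Rightarrow> real) set"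
  assumes f: "inB N S f" and F: "finite F" "F \<subseteq> S" and P0: "finite P0" "P0 \<subseteq> S"
    and Zfin: "finite Z" and cellZ: "\<forall>g\<in>E_set N S. cell g \<in> Z"
    and cellr: "\<forall>g\<in>E_set N S. \<forall>y\<in>F. \<bar>g y - cell g y\<bar> \<le> r"
  shows "\<exists>G::('a \<Rightarrow> real) \<times> 'a option \<Rightarrow> real. (\<forall>i. \<bar>G i\<bar> \<le> 1) \<and> (\<forall>z\<in>Z. 0 \<le> G (z,None)) \<and>
     (\<Sum>z\<in>Z. G (z,None)) = 1 \<and> (\<forall>z\<in>Z. nrmc N S (G (z,None)) (\<lambda>x. G (z,Some x))) \<and>
     (\<forall>z\<in>Z. \<forall>y\<in>F. \<bar>G (z,Some y) - G (z,None) * z y\<bar> \<le> G (z,None) * r) \<and>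
     (\<forall>x\<in>P0. f x = (\<Sum>z\<in>Z. G (z,Some x)))"
proof -
  define P where "P = F \<union> P0"
  have P: "finite P" "P \<subseteq> S" using F P0 by (auto simp: P_def)
  define fP where "fP x = (if x \<in> P then f x else 0)" for x
  have "inB N P fP" unfolding fP_def by (rule inB_restrict[OF f P(2)])
  then have "fP \<in> cc (extp (ballB N P))" using ballB_cc[OF P(1)] by (simp add: ballB_char)
  then obtain I w where I: "finite I" "I \<subseteq> extp (ballB N P)" "\<forall>e\<in>I. 0 \<le> w e" "sum w I = 1"
    "\<forall>x. fP x = (\<Sum>e\<in>I. w e * e x)" unfolding cc_def by blast
  have "\<forall>e\<in>I. \<exists>g. g \<in> E_set N S \<and> (\<forall>x\<in>P. g x = e x)" using ext_to_E[OF P] I(2) by blast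
  then obtain ge where ge: "\<forall>e\<in>I. ge e \<in> E_set N S \<and> (\<forall>x\<in>P. ge e x = e x)" by metis
  have geB: "e \<in> I \<Longrightarrow> inB N S (ge e)" for e using ge E_inB by blast
  have geabs: "e \<in> I \<Longrightarrow> \<bar>ge e x\<bar> \<le> 1" for e x using geB inB_abs_all by blast
  define ce where "ce e = cell (ge e)" for e
  have ceZ: "ce ` I \<subseteq> Z" using ge cellZ by (auto simp: ce_def)
  define J where "J z = {e\<in>I. ce e = z}" for z
  have Jfin: "finite (J z)" "J z \<subseteq> I" for z using I(1) by (auto simp: J_def)
  define G where "G = (\<lambda>(z, ov). case ov of None \<Rightarrow> (\<Sum>e\<in>J z. w e) | Some x \<Rightarrow> (\<Sum>e\<in>J z. w e * ge e x))"
  have Gn: "G (z, None) = (\<Sum>e\<in>J z. w e)" and Gs: "G (z, Some x) = (\<Sum>e\<in>J z. w e * ge e x)" for z x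
    by (simp_all add: G_def)
  have mule: "(\<Sum>e\<in>J z. w e) \<le> 1" for z
  proof -
    have "(\<Sum>e\<in>J z. w e) \<le> (\<Sum>e\<in>I. w e)" using Jfin I by (intro sum_mono2) auto
    then show ?thesis using I(4) by simp
  qed
  have mu0: "0 \<le> (\<Sum>e\<in>J z. w e)" for z using I(3) Jfin by (intro sum_nonneg) auto
  have abs_k: "\<bar>\<Sum>e\<in>J z. w e * ge e x\<bar> \<le> (\<Sum>e\<in>J z. w e)" for z x
  proof -
    have "\<bar>\<Sum>e\<in>J z. w e * ge e x\<bar> \<le> (\<Sum>e\<in>J z. \<bar>w e * ge e x\<bar>)" by (rule sum_abs)
    also have "\<dots> \<le> (\<Sum>e\<in>J z. w e * 1)"
    proof (rule sum_mono)
      fix e assume "e \<in> J z"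
      then have e: "e \<in> I" using Jfin by blast
      have "\<bar>w e * ge e x\<bar> = w e * \<bar>ge e x\<bar>" using I(3) e by (simp add: abs_mult)
      also have "\<dots> \<le> w e * 1" using I(3) e geabs[OF e] by (intro mult_left_mono) auto
      finally show "\<bar>w e * ge e x\<bar> \<le> w e * 1" .
    qed
    finally show ?thesis by simp
  qed
  have grp: "(\<Sum>z\<in>Z. \<Sum>e\<in>J z. h e) = (\<Sum>e\<in>I. h e)" for h :: "_ \<Rightarrow> real"
    unfolding J_def by (rule sum.group[OF I(1) Zfin ceZ])
  show ?thesis
  proof (intro exI[of _ G] conjI ballI allI)
    fix i show "\<bar>G i\<bar> \<le> 1"
    proof (cases i)
      case (Pair z ov) then show ?thesis
        using mule[where z=z] mu0[where z=z] abs_k[where z=z] by (cases ov) (auto simp: G_def intro: order_trans)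
    qed
  next
    fix z assume "z \<in> Z" then show "0 \<le> G (z, None)" using mu0 by (simp add: Gn)
  next
    show "(\<Sum>z\<in>Z. G (z, None)) = 1" using grp[of w] I(4) by (simp add: Gn)
  next
    fix z assume "z \<in> Z"
    show "nrmc N S (G (z, None)) (\<lambda>x. G (z, Some x))"
      unfolding Gn Gs using Jfin I(3) geB by (intro nrmc_sum) (auto intro!: nrmc_inB geB simp: J_def)
  next
    fix z y assume z: "z \<in> Z" and y: "y \<in> F"
    have "G (z, Some y) - G (z, None) * z y = (\<Sum>e\<in>J z. w e * (ge e y - z y))"
      by (simp add: Gn Gs sum_distrib_right right_diff_distrib sum_subtractf)
    also have "\<bar>\<dots>\<bar> \<le> (\<Sum>e\<in>J z. \<bar>w e * (ge e y - z y)\<bar>)" by (rule sum_abs)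
    also have "\<dots> \<le> (\<Sum>e\<in>J z. w e * r)"
    proof (rule sum_mono)
      fix e assume e: "e \<in> J z"
      then have "z = cell (ge e)" "e \<in> I" by (auto simp: J_def ce_def)
      then have "\<bar>ge e y - z y\<bar> \<le> r" using cellr ge y by auto
      then show "\<bar>w e * (ge e y - z y)\<bar> \<le> w e * r" using I(3) \<open>e \<in> I\<close> by (auto simp: abs_mult intro: mult_left_mono)
    qed
    finally show "\<bar>G (z, Some y) - G (z, None) * z y\<bar> \<le> G (z, None) * r" by (simp add: Gn sum_distrib_right)
  next
    fix x assume x: "x \<in> P0"
    then have xP: "x \<in> P" by (simp add: P_def)
    have "(\<Sum>z\<in>Z. G (z, Some x)) = (\<Sum>e\<in>I. w e * ge e x)" using grp[of "\<lambda>e. w e * ge e x"] by (simp add: Gs)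
    also have "\<dots> = (\<Sum>e\<in>I. w e * e x)" using ge xP by (intro sum.cong) auto
    also have "\<dots> = fP x" using I(5) by simp
    also have "\<dots> = f x" using xP by (simp add: fP_def)
    finally show "f x = (\<Sum>z\<in>Z. G (z, Some x))" by simp
  qed
qed


lemma fromG:
  fixes G :: "('a::metric_space \<Rightarrow> real) \<times> 'a option \<Rightarrow> real"
  assumes f: "f \<in> extp (ballB N S)" and Zfin: "finite Z"
    and Zr: "\<forall>z\<in>Z. \<exists>g\<in>E_set N S. \<forall>y\<in>F. \<bar>g y - z y\<bar> \<le> r"
    and G0: "\<forall>z\<in>Z. 0 \<le> G (z,None)" and G1: "(\<Sum>z\<in>Z. G (z,None)) = 1"
    and Gn: "\<forall>z\<in>Z. nrmc N S (G (z,None)) (\<lambda>x. G (z,Some x))"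
    and Gc: "\<forall>z\<in>Z. \<forall>y\<in>F. \<bar>G (z,Some y) - G (z,None) * z y\<bar> \<le> G (z,None) * r"
    and Gf: "\<forall>x\<in>S. f x = (\<Sum>z\<in>Z. G (z,Some x))"
    and F: "F \<subseteq> S"
  shows "\<exists>g\<in>E_set N S. \<forall>y\<in>F. \<bar>g y - f y\<bar> \<le> 2 * r"
proof -
  define Z' where "Z' = {z\<in>Z. 0 < G (z,None)}"
  have Z'fin: "finite Z'" using Zfin by (simp add: Z'_def)
  have Z'sub: "Z' \<subseteq> Z" by (auto simp: Z'_def)
  have zero: "G (z,None) = 0" if "z \<in> Z - Z'" for z using that G0 by (auto simp: Z'_def)
  have zeroS: "G (z,Some x) = 0" if "z \<in> Z - Z'" "x \<in> S" for z x
    using nrmc_zero[of N S "\<lambda>x. G (z,Some x)" x] Gn zero[OF that(1)] that by auto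
  have s1: "(\<Sum>z\<in>Z'. G (z,None)) = 1"
  proof -
    have "(\<Sum>z\<in>Z'. G (z,None)) = (\<Sum>z\<in>Z. G (z,None))"
      by (rule sum.mono_neutral_left[OF Zfin Z'sub]) (use zero in auto)
    then show ?thesis using G1 by simp
  qed
  have ne: "Z' \<noteq> {}" using s1 by auto
  define h where "h z x = (if x \<in> S then G (z,Some x) / G (z,None) else 0)" for z x
  have hB: "\<forall>z\<in>Z'. inB N S (h z)"
  proof
    fix z assume z: "z \<in> Z'"
    then have "0 < G (z,None)" "nrmc N S (G (z,None)) (\<lambda>x. G (z,Some x))" using Gn Z'sub by (auto simp: Z'_def)
    then show "inB N S (h z)" unfolding h_def[abs_def] by (rule nrmc_scale)
  qed
  have fB: "inB N S f" using extp_sub[OF f] by (simp add: ballB_char)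
  have fx: "\<forall>x. f x = (\<Sum>z\<in>Z'. G (z,None) * h z x)"
  proof
    fix x show "f x = (\<Sum>z\<in>Z'. G (z,None) * h z x)"
    proof (cases "x \<in> S")
      case True
      have "f x = (\<Sum>z\<in>Z. G (z,Some x))" using Gf True by simp
      also have "\<dots> = (\<Sum>z\<in>Z'. G (z,Some x))"
        by (rule sum.mono_neutral_right[OF Zfin Z'sub]) (use zeroS True in auto)
      also have "\<dots> = (\<Sum>z\<in>Z'. G (z,None) * h z x)"
        by (rule sum.cong) (auto simp: h_def Z'_def True)
      finally show ?thesis .
    next
      case False then show ?thesis using fB by (simp add: h_def inB_def)
    qed
  qed
  obtain z where z: "z \<in> Z'" "f = h z"
    using ext_comb[OF f Z'fin ne _ s1 hB fx] by (auto simp: Z'_def)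
  have zp: "0 < G (z,None)" "z \<in> Z" using z by (auto simp: Z'_def)
  obtain g where g: "g \<in> E_set N S" "\<forall>y\<in>F. \<bar>g y - z y\<bar> \<le> r" using Zr zp by blast
  have "\<bar>g y - f y\<bar> \<le> 2 * r" if y: "y \<in> F" for y
  proof -
    have "\<bar>G (z,Some y) - G (z,None) * z y\<bar> \<le> G (z,None) * r" using Gc zp y by auto
    then have "\<bar>G (z,Some y) - G (z,None) * z y\<bar> / G (z,None) \<le> r" using zp by (simp add: divide_le_eq mult.commute)
    moreover have "\<bar>G (z,Some y) - G (z,None) * z y\<bar> / G (z,None) = \<bar>f y - z y\<bar>"
    proof -
      have "(G (z,Some y) - G (z,None) * z y) / G (z,None) = G (z,Some y) / G (z,None) - z y"
        using zp by (simp add: field_simps)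
      moreover have "\<bar>G (z,Some y) - G (z,None) * z y\<bar> / G (z,None) = \<bar>(G (z,Some y) - G (z,None) * z y) / G (z,None)\<bar>"
        using zp by simp
      moreover have "f y = G (z,Some y) / G (z,None)" using z(2) y F by (auto simp: h_def)
      ultimately show ?thesis by simp
    qed
    ultimately have "\<bar>f y - z y\<bar> \<le> r" by simp
    then show ?thesis using g(2) y by (auto simp: abs_le_iff)
  qed
  then show ?thesis using g(1) by blast
qed

lemma cl_nrmc:
  assumes "continuous_map X euclideanreal p" "\<And>x. continuous_map X euclideanreal (q x)"
  shows "closedin X {G \<in> topspace X. nrmc N S (p G) (\<lambda>x. q x G)}"
  unfolding nrmc_def
  by (cases N; simp only: bl_norm.case; intro cl_conj cl_all cl_cond cl_le continuous_intros assms) auto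


lemma core:
  fixes S :: "'a::metric_space set"
  assumes f: "f \<in> extp (ballB N S)" and F: "finite F" "F \<subseteq> S" and d: "0 < \<delta>"
  shows "\<exists>g\<in>E_set N S. \<forall>x\<in>F. \<bar>g x - f x\<bar> < \<delta>"
proof -
  define r where "r = \<delta> / 4"
  have r: "0 < r" using d by (simp add: r_def)
  define cell where "cell v = (\<lambda>x. if x \<in> F then r * of_int \<lfloor>v x / r\<rfloor> else 0)" for v :: "'a \<Rightarrow> real"
  let ?E = "E_set N S"
  define Z where "Z = cell ` ?E"
  define K where "K = \<lceil>1 / r\<rceil>"
  have Zsub: "Z \<subseteq> {z. \<forall>x. (x \<in> F \<longrightarrow> z x \<in> (\<lambda>k. r * of_int k) ` {-K..K}) \<and> (x \<notin> F \<longrightarrow> z x = 0)}"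
  proof
    fix z assume "z \<in> Z"
    then obtain g where g: "g \<in> ?E" "z = cell g" by (auto simp: Z_def)
    have "\<lfloor>g x / r\<rfloor> \<in> {-K..K}" if x: "x \<in> F" for x
    proof -
      have ab: "\<bar>g x\<bar> \<le> 1" using E_inB[OF g(1)] inB_abs_all by blast
      have "g x \<le> 1" "-1 \<le> g x" using ab by (auto simp: abs_le_iff)
      then have "g x / r \<le> 1 / r" "(-1) / r \<le> g x / r" using r
        by (simp_all only: divide_right_mono less_imp_le)
      then have "g x / r \<le> 1 / r" "- (1 / r) \<le> g x / r" by (simp_all only: minus_divide_left)
      then have "\<lfloor>g x / r\<rfloor> \<le> \<lfloor>1 / r\<rfloor>" "\<lfloor>- (1 / r)\<rfloor> \<le> \<lfloor>g x / r\<rfloor>" by (auto intro: floor_mono)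
      moreover have "\<lfloor>1 / r\<rfloor> \<le> K" unfolding K_def by (rule floor_le_ceiling)
      moreover have "\<lfloor>- (1 / r)\<rfloor> = - K" unfolding K_def by (simp add: ceiling_def)
      ultimately show ?thesis by auto
    qed
    then show "z \<in> {z. \<forall>x. (x \<in> F \<longrightarrow> z x \<in> (\<lambda>k. r * of_int k) ` {-K..K}) \<and> (x \<notin> F \<longrightarrow> z x = 0)}"
      using g by (auto simp: cell_def)
  qed
  have Zfin: "finite Z" by (rule finite_subset[OF Zsub finite_cells[OF F(1)]]) simp
  have cellZ: "\<forall>g\<in>?E. cell g \<in> Z" by (simp add: Z_def)
  have cellr: "\<forall>g\<in>?E. \<forall>y\<in>F. \<bar>g y - cell g y\<bar> \<le> r" using floor_cell[OF r] by (simp add: cell_def)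
  have Zr: "\<forall>z\<in>Z. \<exists>g\<in>?E. \<forall>y\<in>F. \<bar>g y - z y\<bar> \<le> r" using cellr by (auto simp: Z_def)
  have fB: "inB N S f" using extp_sub[OF f] by (simp add: ballB_char)
  define X where "X = product_topology (\<lambda>_::('a \<Rightarrow> real) \<times> 'a option. euclideanreal) UNIV"
  have top: "topspace X = UNIV" by (simp add: X_def)
  have proj: "continuous_map X euclideanreal (\<lambda>G. G i)" for i
    unfolding X_def by (rule continuous_map_product_projection) simp
  define Box where "Box = PiE (UNIV :: (('a \<Rightarrow> real) \<times> 'a option) set) (\<lambda>_. {-1..1::real})"
  have Box_iff: "G \<in> Box \<longleftrightarrow> (\<forall>i. \<bar>G i\<bar> \<le> 1)" for G by (auto simp: Box_def abs_le_iff)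
  have cBox: "compactin X Box" unfolding X_def Box_def by (subst compactin_PiE) auto
  define CG where "CG = {G \<in> topspace X. (\<forall>z\<in>Z. 0 \<le> G (z,None)) \<and>
     ((\<Sum>z\<in>Z. G (z,None)) \<le> 1 \<and> 1 \<le> (\<Sum>z\<in>Z. G (z,None))) \<and>
     (\<forall>z\<in>Z. nrmc N S (G (z,None)) (\<lambda>x. G (z,Some x))) \<and>
     (\<forall>z\<in>Z. \<forall>y\<in>F. \<bar>G (z,Some y) - G (z,None) * z y\<bar> \<le> G (z,None) * r)}"
  define Ax where "Ax x = {G \<in> topspace X. f x \<le> (\<Sum>z\<in>Z. G (z,Some x)) \<and> (\<Sum>z\<in>Z. G (z,Some x)) \<le> f x}" for x
  have cc: "continuous_map X euclideanreal (\<lambda>G. c)" for c :: real by simp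
  have cs: "continuous_map X euclideanreal (\<lambda>G. \<Sum>z\<in>Z. G (\<phi> z))" for \<phi>
    by (rule continuous_map_sum[OF Zfin]) (rule proj)
  have c4: "continuous_map X euclideanreal (\<lambda>G. \<bar>G (z,Some y) - G (z,None) * z y\<bar>)" for z y
    by (rule continuous_map_real_abs, rule continuous_map_diff, rule proj, rule continuous_map_real_mult, rule proj, rule cc)
  have c5: "continuous_map X euclideanreal (\<lambda>G. G (z,None) * r)" for z
    by (rule continuous_map_real_mult, rule proj, rule cc)
  have k1: "closedin X {G \<in> topspace X. \<forall>z\<in>Z. 0 \<le> G (z,None)}"
    by (rule cl_all, rule cl_le[OF cc proj])
  have k2: "closedin X {G \<in> topspace X. (\<Sum>z\<in>Z. G (z,None)) \<le> 1 \<and> 1 \<le> (\<Sum>z\<in>Z. G (z,None))}"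
    by (rule cl_conj, rule cl_le[OF cs cc], rule cl_le[OF cc cs])
  have k3: "closedin X {G \<in> topspace X. \<forall>z\<in>Z. nrmc N S (G (z,None)) (\<lambda>x. G (z,Some x))}"
    by (rule cl_all, rule cl_nrmc[OF proj proj])
  have k4: "closedin X {G \<in> topspace X. \<forall>z\<in>Z. \<forall>y\<in>F. \<bar>G (z,Some y) - G (z,None) * z y\<bar> \<le> G (z,None) * r}"
  proof (rule cl_all, rule cl_all)
    fix z y
    note t = cl_le[OF c4[of z y] c5[of z]]
    then show "closedin X {G \<in> topspace X. \<bar>G (z,Some y) - G (z,None) * z y\<bar> \<le> G (z,None) * r}"
      by simp
  qed
  have clCG: "closedin X CG" unfolding CG_def
    by (rule cl_conj[OF k1 cl_conj[OF k2 cl_conj[OF k3 k4]]])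
  have clAx: "closedin X (Ax x)" for x unfolding Ax_def
    by (rule cl_conj, rule cl_le[OF cc cs], rule cl_le[OF cs cc])
  have fip: "Box \<inter> \<Inter>V \<noteq> {}" if V: "finite V" "V \<subseteq> insert CG (Ax ` S)" for V
  proof -
    have "V - {CG} \<subseteq> Ax ` S" "finite (V - {CG})" using V by auto
    then obtain P0 where P0: "P0 \<subseteq> S" "finite P0" "V - {CG} = Ax ` P0"
      using finite_subset_image by metis
    obtain G where G: "\<forall>i. \<bar>G i\<bar> \<le> 1" "\<forall>z\<in>Z. 0 \<le> G (z,None)" "(\<Sum>z\<in>Z. G (z,None)) = 1"
      "\<forall>z\<in>Z. nrmc N S (G (z,None)) (\<lambda>x. G (z,Some x))"
      "\<forall>z\<in>Z. \<forall>y\<in>F. \<bar>G (z,Some y) - G (z,None) * z y\<bar> \<le> G (z,None) * r"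
      "\<forall>x\<in>P0. f x = (\<Sum>z\<in>Z. G (z,Some x))"
      using exG[OF fB F P0(2,1) Zfin cellZ cellr] by blast
    have "G \<in> Box" using G(1) Box_iff by blast
    moreover have "G \<in> CG" using G(2-5) by (simp add: CG_def top)
    moreover have "G \<in> Ax x" if "x \<in> P0" for x using G(6) that by (simp add: Ax_def top)
    ultimately have "G \<in> Box \<inter> \<Inter>V" using P0(3) by blast
    then show ?thesis by blast
  qed
  note cf = conjunct2[OF iffD1[OF compactin_fip cBox]]
  have cl: "\<forall>C\<in>insert CG (Ax ` S). closedin X C" using clCG clAx by blast
  have fp: "\<forall>V. finite V \<and> V \<subseteq> insert CG (Ax ` S) \<longrightarrow> Box \<inter> \<Inter>V \<noteq> {}" using fip by blast
  have "Box \<inter> \<Inter>(insert CG (Ax ` S)) \<noteq> {}"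
    using spec[OF cf, of "insert CG (Ax ` S)"] cl fp by blast
  then obtain G where G: "G \<in> CG" "\<And>x. x \<in> S \<Longrightarrow> G \<in> Ax x" by blast
  have "\<exists>g\<in>?E. \<forall>y\<in>F. \<bar>g y - f y\<bar> \<le> 2 * r"
  proof (rule fromG[OF f Zfin Zr])
    show "\<forall>z\<in>Z. 0 \<le> G (z,None)" "(\<Sum>z\<in>Z. G (z,None)) = 1"
      "\<forall>z\<in>Z. nrmc N S (G (z,None)) (\<lambda>x. G (z,Some x))"
      "\<forall>z\<in>Z. \<forall>y\<in>F. \<bar>G (z,Some y) - G (z,None) * z y\<bar> \<le> G (z,None) * r"
      using G(1) by (auto simp: CG_def)
    show "\<forall>x\<in>S. f x = (\<Sum>z\<in>Z. G (z,Some x))"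
    proof
      fix x assume "x \<in> S"
      then have "f x \<le> (\<Sum>z\<in>Z. G (z,Some x))" "(\<Sum>z\<in>Z. G (z,Some x)) \<le> f x" using G(2) by (auto simp: Ax_def)
      then show "f x = (\<Sum>z\<in>Z. G (z,Some x))" by linarith
    qed
    show "F \<subseteq> S" by (rule F(2))
  qed
  then obtain g where g: "g \<in> ?E" "\<forall>y\<in>F. \<bar>g y - f y\<bar> \<le> 2 * r" by blast
  have rd: "2 * r < \<delta>" using d by (simp add: r_def)
  have "\<forall>y\<in>F. \<bar>g y - f y\<bar> < \<delta>"
  proof
    fix y assume "y \<in> F"
    then have "\<bar>g y - f y\<bar> \<le> 2 * r" using g(2) by blast
    then show "\<bar>g y - f y\<bar> < \<delta>" using rd by linarith
  qed
  then show ?thesis using g(1) by blast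
qed


lemma wstar_part:
  fixes S :: "'a::metric_space set"
  shows "wstar_dense_in N S (E_set N S) (extp (ballB N S))"
  unfolding wstar_dense_in_def
proof (intro ballI allI impI)
  fix f and \<Phi> :: "(('a \<Rightarrow> real) \<Rightarrow> real) set" and \<epsilon> :: real
  assume f: "f \<in> extp (ballB N S)" and Ph: "finite \<Phi> \<and> \<Phi> \<subseteq> predual N S" and e: "0 < \<epsilon>"
  have "\<forall>\<phi>\<in>\<Phi>. \<exists>F c. finite F \<and> F \<subseteq> S \<and> (\<forall>g\<in>ballB N S. \<bar>\<phi> g - (\<Sum>y\<in>F. c y * g y)\<bar> \<le> \<epsilon> / 3)"
  proof
    fix \<phi> assume "\<phi> \<in> \<Phi>"
    then have "\<phi> \<in> predual N S" using Ph by blast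
    then have "\<forall>\<epsilon>>0. \<exists>F c. finite F \<and> F \<subseteq> S \<and> (\<forall>f\<in>ballB N S. \<bar>\<phi> f - (\<Sum>y\<in>F. c y * f y)\<bar> \<le> \<epsilon>)"
      by (simp add: predual_def)
    then have h: "0 < \<epsilon> / 3 \<longrightarrow> (\<exists>F c. finite F \<and> F \<subseteq> S \<and> (\<forall>f\<in>ballB N S. \<bar>\<phi> f - (\<Sum>y\<in>F. c y * f y)\<bar> \<le> \<epsilon> / 3))"
      by (rule spec)
    have "0 < \<epsilon> / 3" using e by simp
    with h show "\<exists>F c. finite F \<and> F \<subseteq> S \<and> (\<forall>g\<in>ballB N S. \<bar>\<phi> g - (\<Sum>y\<in>F. c y * g y)\<bar> \<le> \<epsilon> / 3)"
      by (rule mp)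
  qed
  then obtain Ff where "\<forall>\<phi>\<in>\<Phi>. \<exists>c. finite (Ff \<phi>) \<and> Ff \<phi> \<subseteq> S \<and> (\<forall>g\<in>ballB N S. \<bar>\<phi> g - (\<Sum>y\<in>Ff \<phi>. c y * g y)\<bar> \<le> \<epsilon> / 3)"
    by (rule bchoice[THEN exE]) blast
  then obtain cf where cf: "\<forall>\<phi>\<in>\<Phi>. finite (Ff \<phi>) \<and> Ff \<phi> \<subseteq> S \<and> (\<forall>g\<in>ballB N S. \<bar>\<phi> g - (\<Sum>y\<in>Ff \<phi>. cf \<phi> y * g y)\<bar> \<le> \<epsilon> / 3)"
    by (rule bchoice[THEN exE]) blast
  define Fa where "Fa = (\<Union>\<phi>\<in>\<Phi>. Ff \<phi>)"
  have Fa: "finite Fa" "Fa \<subseteq> S" using cf Ph by (auto simp: Fa_def)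
  define M where "M = 1 + (\<Sum>\<phi>\<in>\<Phi>. \<Sum>y\<in>Ff \<phi>. \<bar>cf \<phi> y\<bar>)"
  have M0: "0 \<le> (\<Sum>\<phi>\<in>\<Phi>. \<Sum>y\<in>Ff \<phi>. \<bar>cf \<phi> y\<bar>)" by (intro sum_nonneg) auto
  then have M1: "1 \<le> M" by (simp add: M_def)
  define \<delta> where "\<delta> = \<epsilon> / (3 * M)"
  have d: "0 < \<delta>" using e M1 by (simp add: \<delta>_def)
  obtain g where g: "g \<in> E_set N S" "\<forall>x\<in>Fa. \<bar>g x - f x\<bar> < \<delta>" using core[OF f Fa d] by blast
  have gB: "g \<in> ballB N S" using E_sub_extp g(1) extp_sub by blast
  have fB: "f \<in> ballB N S" using f extp_sub by blast
  have "\<forall>\<phi>\<in>\<Phi>. \<bar>\<phi> g - \<phi> f\<bar> < \<epsilon>"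
  proof
    fix \<phi> assume ph: "\<phi> \<in> \<Phi>"
    let ?F = "Ff \<phi>" and ?c = "cf \<phi>"
    have 1: "\<bar>\<phi> g - (\<Sum>y\<in>?F. ?c y * g y)\<bar> \<le> \<epsilon> / 3" using cf ph gB by blast
    have 2: "\<bar>\<phi> f - (\<Sum>y\<in>?F. ?c y * f y)\<bar> \<le> \<epsilon> / 3" using cf ph fB by blast
    have sc: "(\<Sum>y\<in>?F. \<bar>?c y\<bar>) \<le> M - 1"
    proof -
      have "(\<Sum>y\<in>?F. \<bar>?c y\<bar>) \<le> (\<Sum>\<phi>\<in>\<Phi>. \<Sum>y\<in>Ff \<phi>. \<bar>cf \<phi> y\<bar>)"
        using ph Ph by (intro member_le_sum[where f = "\<lambda>\<phi>. \<Sum>y\<in>Ff \<phi>. \<bar>cf \<phi> y\<bar>"]) (auto intro: sum_nonneg)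
      then show ?thesis by (simp add: M_def)
    qed
    have "\<bar>(\<Sum>y\<in>?F. ?c y * g y) - (\<Sum>y\<in>?F. ?c y * f y)\<bar> = \<bar>\<Sum>y\<in>?F. ?c y * (g y - f y)\<bar>"
      by (simp add: sum_subtractf[symmetric] right_diff_distrib)
    also have "\<dots> \<le> (\<Sum>y\<in>?F. \<bar>?c y * (g y - f y)\<bar>)" by (rule sum_abs)
    also have "\<dots> \<le> (\<Sum>y\<in>?F. \<bar>?c y\<bar> * \<delta>)"
    proof (rule sum_mono)
      fix y assume "y \<in> ?F"
      then have "y \<in> Fa" using ph by (auto simp: Fa_def)
      then have "\<bar>g y - f y\<bar> \<le> \<delta>" using g(2) by (auto intro: less_imp_le)
      then show "\<bar>?c y * (g y - f y)\<bar> \<le> \<bar>?c y\<bar> * \<delta>" by (simp add: abs_mult mult_left_mono)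
    qed
    also have "\<dots> = (\<Sum>y\<in>?F. \<bar>?c y\<bar>) * \<delta>" by (simp add: sum_distrib_right)
    also have "\<dots> \<le> (M - 1) * \<delta>" using sc d by (intro mult_right_mono) auto
    finally have 3: "\<bar>(\<Sum>y\<in>?F. ?c y * g y) - (\<Sum>y\<in>?F. ?c y * f y)\<bar> \<le> (M - 1) * \<delta>" .
    have "M * \<delta> = \<epsilon> / 3" using M1 by (simp add: \<delta>_def)
    then have "(M - 1) * \<delta> < \<epsilon> / 3" using d by (simp add: left_diff_distrib)
    moreover have "\<bar>\<phi> g - \<phi> f\<bar> \<le> \<bar>\<phi> g - (\<Sum>y\<in>?F. ?c y * g y)\<bar> +
        \<bar>(\<Sum>y\<in>?F. ?c y * g y) - (\<Sum>y\<in>?F. ?c y * f y)\<bar> + \<bar>\<phi> f - (\<Sum>y\<in>?F. ?c y * f y)\<bar>"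
      by (simp add: abs_le_iff) linarith
    ultimately show "\<bar>\<phi> g - \<phi> f\<bar> < \<epsilon>" using 1 2 3 by linarith
  qed
  then show "\<exists>g\<in>E_set N S. \<forall>\<phi>\<in>\<Phi>. \<bar>\<phi> g - \<phi> f\<bar> < \<epsilon>" using g(1) by blast
qed

lemma sup_part:
  fixes S :: "'a::metric_space set"
  assumes "compact S"
  shows "sup_dense_in S (E_set N S) (extp (ballB N S))"
  unfolding sup_dense_in_def
proof (intro ballI allI impI)
  fix f and \<epsilon> :: real assume f: "f \<in> extp (ballB N S)" and e: "0 < \<epsilon>"
  have "seq_compact S" using assms by (rule compact_imp_seq_compact)
  then obtain k where k: "finite k" "k \<subseteq> S" "S \<subseteq> (\<Union>x\<in>k. ball x (\<epsilon> / 4))"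
    using seq_compact_imp_totally_bounded[of S] e by (metis divide_pos_pos zero_less_numeral)
  obtain g where g: "g \<in> E_set N S" "\<forall>x\<in>k. \<bar>g x - f x\<bar> < \<epsilon> / 4"
    using core[OF f k(1,2), of "\<epsilon> / 4"] e by auto
  have fB: "inB N S f" using f extp_sub by (auto simp: ballB_char)
  have gB: "inB N S g" using g(1) by (rule E_inB)
  have "\<bar>f x - g x\<bar> < \<epsilon>" if x: "x \<in> S" for x
  proof -
    obtain y where y: "y \<in> k" "dist y x < \<epsilon> / 4" using k(3) x by auto
    have yS: "y \<in> S" using y k by auto
    have "\<bar>f x - f y\<bar> \<le> dist x y" by (rule inB_lip1[OF fB x yS])
    moreover have "\<bar>g y - g x\<bar> \<le> dist y x" by (rule inB_lip1[OF gB yS x])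
    moreover have "\<bar>g y - f y\<bar> < \<epsilon> / 4" using g(2) y by auto
    moreover have "dist x y = dist y x" by (rule dist_commute)
    ultimately have h: "f x - f y \<le> dist y x" "f y - f x \<le> dist y x" "g y - g x \<le> dist y x" "g x - g y \<le> dist y x"
      "g y - f y < \<epsilon> / 4" "f y - g y < \<epsilon> / 4"
      by (simp_all only: abs_le_iff abs_less_iff) linarith+
    then have "f x - g x < \<epsilon>" "g x - f x < \<epsilon>" using y(2) by linarith+
    then show ?thesis by (simp add: abs_less_iff)
  qed
  then show "\<exists>g\<in>E_set N S. \<forall>x\<in>S. \<bar>f x - g x\<bar> < \<epsilon>" using g(1) by blast
qed

theorem theorem5p5:
  fixes S :: "'a::metric_space set" and N :: bl_norm
  shows "E_set N S \<subseteq> extp (ballB N S) \<and>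
         wstar_dense_in N S (E_set N S) (extp (ballB N S)) \<and>
         (compact S \<longrightarrow> sup_dense_in S (E_set N S) (extp (ballB N S)))"
  using E_sub_extp wstar_part sup_part by blast


end
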